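(* Let $U_1,\dots,U_n$ be i.i.d.\ draws from the uniform distribution on $[-1/2,1/2]$, and let $U_{(1)}\le U_{(2)}\le\cdots\le U_{(n)}$ be their non-decreasing ordering. Then $$\Pr\Big(\sum_{i=1}^n \big(U_{(i)} + U_{(n+1-i)}\big)^2 \ge 1\Big) \le \frac12 .$$ *)

theory Defs
  imports "HOL-Probability.Probability"
begin

text \<open>Order statistics of a sample u 0, ..., u (n-1), 0-indexed:
  order_stat n u i is the (i+1)-th smallest value U_(i+1).\<close>
definition order_stat :: "nat \<Rightarrow> (nat \<Rightarrow> real) \<Rightarrow> nat \<Rightarrow> real" where
  "order_stat n u i = sort (map u [0..<n]) ! i"

definition unif_sample :: "nat \<Rightarrow> (nat \<Rightarrow> real) measure" where
  "unif_sample n = PiM {..<n} (\<lambda>_. uniform_measure lborel {-1/2..1/2::real})"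

end

theory Submission
  imports Defs
begin

lemma sorted_nth_le_iff:
  fixes xs :: "real list"
  assumes "sorted xs" "i < length xs"
  shows "xs ! i \<le> s \<longleftrightarrow> i < length (filter (\<lambda>y. y \<le> s) xs)"
proof -
  define K where "K = {j. j < length xs \<and> xs ! j \<le> s}"
  have cK: "length (filter (\<lambda>y. y \<le> s) xs) = card K"
    unfolding K_def by (rule length_filter_conv_card)
  have fin: "finite K" unfolding K_def by auto
  show ?thesis
  proof
    assume h: "xs ! i \<le> s"
    have "{..i} \<subseteq> K"
    proof
      fix j assume "j \<in> {..i}"
      then have "j \<le> i" by auto
      then have "xs ! j \<le> xs ! i" using assms sorted_nth_mono by blast
      then show "j \<in> K" using h \<open>j \<le> i\<close> assms(2) unfolding K_def by auto
    qed
    then have "card {..i} \<le> card K" using fin card_mono by blast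
    then show "i < length (filter (\<lambda>y. y \<le> s) xs)" using cK by simp
  next
    assume h: "i < length (filter (\<lambda>y. y \<le> s) xs)"
    show "xs ! i \<le> s"
    proof (rule ccontr)
      assume nh: "\<not> xs ! i \<le> s"
      have "K \<subseteq> {..<i}"
      proof
        fix j assume "j \<in> K"
        then have j: "j < length xs" "xs ! j \<le> s" unfolding K_def by auto
        show "j \<in> {..<i}"
        proof (rule ccontr)
          assume "j \<notin> {..<i}"
          then have "i \<le> j" by auto
          then have "xs ! i \<le> xs ! j" using assms(1) j(1) sorted_nth_mono by blast
          then show False using nh j by auto
        qed
      qed
      then have "card K \<le> i" using card_mono[of "{..<i}" K] by auto
      then show False using h cK by simp
    qed
  qed
qed

definition cnt :: "nat \<Rightarrow> real \<Rightarrow> (nat \<Rightarrow> real) \<Rightarrow> nat" where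
  "cnt n s u = card {j. j < n \<and> u j \<le> s}"

lemma cnt_filter_sort:
  "length (filter (\<lambda>y. y \<le> s) (sort (map u [0..<n]))) = cnt n s u"
proof -
  have "length (filter (\<lambda>y. y \<le> s) (sort (map u [0..<n])))
      = length (filter (\<lambda>y. y \<le> s) (map u [0..<n]))"
    by (metis mset_filter mset_sort size_mset)
  also have "\<dots> = length (filter (\<lambda>j. u j \<le> s) [0..<n])"
    by (simp add: filter_map o_def)
  also have "\<dots> = card {j. j < n \<and> u j \<le> s}"
    by (subst length_filter_conv_card) (auto intro!: arg_cong[where f=card])
  finally show ?thesis unfolding cnt_def .
qed

lemma order_stat_le_iff:
  assumes "i < n"
  shows "order_stat n u i \<le> s \<longleftrightarrow> i < cnt n s u"
  unfolding order_stat_def cnt_filter_sort[symmetric]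
  by (rule sorted_nth_le_iff) (use assms in auto)

lemma cnt_le: "cnt n s u \<le> n"
  unfolding cnt_def by (rule order_trans[OF card_mono[of "{..<n}"]]) auto

lemma order_stat_mono: "i \<le> j \<Longrightarrow> j < n \<Longrightarrow> order_stat n u i \<le> order_stat n u j"
  unfolding order_stat_def by (rule sorted_nth_mono) auto

lemma order_stat_in:
  assumes "\<And>j. j < n \<Longrightarrow> u j \<in> {a..b}" "i < n"
  shows "order_stat n u i \<in> {a..b}"
proof -
  have "order_stat n u i \<in> set (sort (map u [0..<n]))"
    unfolding order_stat_def using assms(2) by (intro nth_mem) auto
  then have "order_stat n u i \<in> set (map u [0..<n])" by simp
  then show ?thesis using assms(1) by auto
qed


lemma sum_ge_count: "a \<le> n \<Longrightarrow> (\<Sum>i<n. of_bool (a \<le> i) :: real) = real (n - a)"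
proof -
  assume "a \<le> n"
  have "{..<n} \<inter> {i. a \<le> i} = {a..<n}" by auto
  then show ?thesis by simp
qed

definition gg :: "nat \<Rightarrow> nat \<Rightarrow> nat \<Rightarrow> real" where
  "gg n i k = of_bool (k \<le> i) - of_bool (n - i \<le> k)"

lemma gg_sum:
  assumes "k \<le> n" "l \<le> n"
  shows "(\<Sum>i<n. gg n i k * gg n i l) = \<bar>real k + real l - real n\<bar> - \<bar>real k - real l\<bar>"
proof -
  have e: "gg n i k * gg n i l = of_bool (max k l \<le> i) - of_bool (max k (n - l) \<le> i)
      - of_bool (max l (n - k) \<le> i) + of_bool (n - min k l \<le> i)" if "i < n" for i
    using that unfolding gg_def by (auto simp: of_bool_def split: if_splits)
  have "(\<Sum>i<n. gg n i k * gg n i l) = (\<Sum>i<n. of_bool (max k l \<le> i) - of_bool (max k (n - l) \<le> i)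
      - of_bool (max l (n - k) \<le> i) + of_bool (n - min k l \<le> i) :: real)"
    by (rule sum.cong) (auto simp: e)
  also have "\<dots> = real (n - max k l) - real (n - max k (n - l)) - real (n - max l (n - k))
        + real (n - (n - min k l))"
    using assms sum_ge_count[of "max k l" n] sum_ge_count[of "max k (n - l)" n]
       sum_ge_count[of "max l (n - k)" n] sum_ge_count[of "n - min k l" n]
    by (simp only: sum.distrib sum_subtractf)
  also have "\<dots> = \<bar>real k + real l - real n\<bar> - \<bar>real k - real l\<bar>"
    using assms by (auto simp: max_def min_def of_nat_diff)
  finally show ?thesis .
qed

context
  fixes n :: nat and u :: "nat \<Rightarrow> real"
begin

definition ee :: "nat \<Rightarrow> real" where
  "ee k = (if k = 0 then -1/2 else if k \<le> n then order_stat n u (k - 1) else 1/2)"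

definition len :: "nat \<Rightarrow> real" where
  "len k = ee (Suc k) - ee k"

lemma len_telescope: "(\<Sum>k<m. len k) = ee m - ee 0"
  unfolding len_def by (rule sum_lessThan_telescope)

lemma D_repr:
  assumes "i < n"
  shows "order_stat n u i + order_stat n u (n - 1 - i) = (\<Sum>k\<le>n. len k * gg n i k)"
proof -
  have 1: "(\<Sum>k\<le>n. len k * of_bool (k \<le> i)) = (\<Sum>k<Suc i. len k)"
    using assms by (intro sum.mono_neutral_cong_right) auto
  have 2: "(\<Sum>k\<le>n. len k * of_bool (n - i \<le> k)) = (\<Sum>k<Suc n. len k) - (\<Sum>k<n - i. len k)"
  proof -
    have "(\<Sum>k<Suc n. len k) = sum len ({..<n-i} \<union> {n-i..n})" by (rule sum.cong) auto
    also have "\<dots> = (\<Sum>k<n - i. len k) + (\<Sum>k\<in>{n-i..n}. len k)"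
      by (rule sum.union_disjoint) auto
    finally have "(\<Sum>k<Suc n. len k) = (\<Sum>k<n - i. len k) + (\<Sum>k\<in>{n-i..n}. len k)" .
    moreover have "(\<Sum>k\<le>n. len k * of_bool (n - i \<le> k)) = (\<Sum>k\<in>{n-i..n}. len k)"
      by (intro sum.mono_neutral_cong_right) auto
    ultimately show ?thesis by simp
  qed
  have "(\<Sum>k\<le>n. len k * gg n i k) = (\<Sum>k\<le>n. len k * of_bool (k \<le> i)) - (\<Sum>k\<le>n. len k * of_bool (n - i \<le> k))"
    unfolding gg_def by (simp add: algebra_simps sum_subtractf)
  also have "\<dots> = (ee (Suc i) - ee 0) - ((ee (Suc n) - ee 0) - (ee (n - i) - ee 0))"
    unfolding 1 2 len_telescope ..
  also have "\<dots> = order_stat n u i + order_stat n u (n - 1 - i)"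
    using assms unfolding ee_def by (auto simp: Suc_diff_Suc)
  finally show ?thesis by simp
qed

lemma S_repr:
  "(\<Sum>i<n. (order_stat n u i + order_stat n u (n - 1 - i))^2)
   = (\<Sum>k\<le>n. \<Sum>l\<le>n. len k * len l * (\<bar>real k + real l - real n\<bar> - \<bar>real k - real l\<bar>))"
proof -
  have "(\<Sum>i<n. (order_stat n u i + order_stat n u (n - 1 - i))^2)
      = (\<Sum>i<n. (\<Sum>k\<le>n. len k * gg n i k) * (\<Sum>l\<le>n. len l * gg n i l))"
  proof (rule sum.cong[OF refl])
    fix i assume "i \<in> {..<n}"
    then show "(order_stat n u i + order_stat n u (n - 1 - i))^2 = (\<Sum>k\<le>n. len k * gg n i k) * (\<Sum>l\<le>n. len l * gg n i l)"
      using D_repr[of i] by (simp add: power2_eq_square)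
  qed
  also have "\<dots> = (\<Sum>i<n. \<Sum>k\<le>n. \<Sum>l\<le>n. len k * len l * (gg n i k * gg n i l))"
    by (simp add: sum_product mult_ac)
  also have "\<dots> = (\<Sum>k\<le>n. \<Sum>l\<le>n. len k * len l * (\<Sum>i<n. gg n i k * gg n i l))"
    by (simp add: sum_distrib_left sum.swap[of _ "{..<n}"])
  also have "\<dots> = (\<Sum>k\<le>n. \<Sum>l\<le>n. len k * len l * (\<bar>real k + real l - real n\<bar> - \<bar>real k - real l\<bar>))"
    by (intro sum.cong refl) (simp add: gg_sum)
  finally show ?thesis .
qed

end


abbreviation "II \<equiv> {-1/2..1/2::real}"

lemma cnt_sum: "cnt n s u = (\<Sum>j<n. if u j \<le> s then 1 else 0)"
proof -
  have "(\<Sum>j<n. if u j \<le> s then 1 else 0) = (\<Sum>j<n. of_bool (u j \<le> s) :: nat)"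
    by (rule sum.cong) auto
  also have "\<dots> = card ({..<n} \<inter> {j. u j \<le> s})" by simp
  also have "{..<n} \<inter> {j. u j \<le> s} = {j. j < n \<and> u j \<le> s}" by auto
  finally show ?thesis unfolding cnt_def by simp
qed

context
  fixes n :: nat and u :: "nat \<Rightarrow> real"
  assumes cube: "\<And>j. j < n \<Longrightarrow> u j \<in> II"
begin

lemma os_in: "i < n \<Longrightarrow> order_stat n u i \<in> II"
  using order_stat_in[of n u, OF cube] by auto

lemma ee_in: "ee n u k \<in> II"
  unfolding ee_def using os_in by auto

lemma ee_mono: "ee n u k \<le> ee n u (Suc k)"
proof -
  consider "k = 0" | "0 < k" "k < n" | "k = n" "0 < n" | "n < k" by linarith
  then show ?thesis
  proof cases
    case 1 then show ?thesis using ee_in[of 1] by (auto simp: ee_def)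
  next
    case 2 then show ?thesis unfolding ee_def by (auto intro: order_stat_mono)
  next
    case 3 then show ?thesis unfolding ee_def using os_in[of "n-1"] by auto
  next
    case 4 then show ?thesis unfolding ee_def by auto
  qed
qed

lemma len_nonneg: "0 \<le> len n u k"
  unfolding len_def using ee_mono[of k] by simp

definition Iv :: "nat \<Rightarrow> real set" where
  "Iv k = (if k < n then {ee n u k..<ee n u (Suc k)} else {ee n u n..1/2})"

lemma cnt_eq_iff:
  assumes s: "s \<in> II" and k: "k \<le> n"
  shows "cnt n s u = k \<longleftrightarrow> s \<in> Iv k"
proof -
  have A: "ee n u k \<le> s \<longleftrightarrow> k \<le> cnt n s u"
  proof (cases k)
    case 0 then show ?thesis using s by (simp add: ee_def)
  next
    case (Suc k')
    then have "ee n u k = order_stat n u k'" using k by (simp add: ee_def)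
    then show ?thesis using order_stat_le_iff[of k' n u s] Suc k by auto
  qed
  have B: "k < n \<Longrightarrow> (s < ee n u (Suc k) \<longleftrightarrow> cnt n s u \<le> k)"
  proof -
    assume "k < n"
    then have "ee n u (Suc k) = order_stat n u k" by (simp add: ee_def)
    then show ?thesis using order_stat_le_iff[of k n u s] \<open>k < n\<close> by auto
  qed
  show ?thesis
  proof (cases "k < n")
    case True
    then show ?thesis using A B unfolding Iv_def by auto
  next
    case False
    then have "k = n" using k by auto
    then show ?thesis using A s cnt_le[of n s u] unfolding Iv_def by auto
  qed
qed

lemma emeasure_Iv: "k \<le> n \<Longrightarrow> emeasure lborel (Iv k) = ennreal (len n u k)"
  unfolding Iv_def len_def using ee_mono[of k] ee_mono[of n]
  by (auto simp: emeasure_lborel_Ico emeasure_lborel_Icc ee_def[of n u "Suc n"])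

lemma Iv_sub: "k \<le> n \<Longrightarrow> Iv k \<subseteq> II"
  unfolding Iv_def using ee_in[of k] ee_in[of "Suc k"] ee_in[of n] by auto

lemma Iv_ind:
  fixes f :: "nat \<Rightarrow> ennreal"
  shows "indicator II s * f (cnt n s u) = (\<Sum>k\<le>n. f k * indicator (Iv k) s)"
proof (cases "s \<in> II")
  case True
  have z: "\<And>k. k \<le> n \<Longrightarrow> k \<noteq> cnt n s u \<Longrightarrow> s \<notin> Iv k" using cnt_eq_iff[OF True] by blast
  have c: "s \<in> Iv (cnt n s u)" using cnt_eq_iff[OF True cnt_le[of n s u]] by simp
  have "(\<Sum>k\<le>n. f k * indicator (Iv k) s) = (\<Sum>k\<in>{cnt n s u}. f k * indicator (Iv k) s)"
    by (rule sum.mono_neutral_right) (use z cnt_le[of n s u] in \<open>auto\<close>)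
  then show ?thesis using True c by simp
next
  case False
  have "\<And>k. k \<le> n \<Longrightarrow> s \<notin> Iv k" using Iv_sub False by blast
  then show ?thesis using False by (auto intro!: sum.neutral)
qed

lemma integral_cnt:
  fixes f :: "nat \<Rightarrow> ennreal"
  shows "(\<integral>\<^sup>+s. indicator II s * f (cnt n s u) \<partial>lborel) = (\<Sum>k\<le>n. ennreal (len n u k) * f k)"
proof -
  have "(\<integral>\<^sup>+s. indicator II s * f (cnt n s u) \<partial>lborel) = (\<integral>\<^sup>+s. (\<Sum>k\<le>n. f k * indicator (Iv k) s) \<partial>lborel)"
    by (rule nn_integral_cong) (rule Iv_ind)
  also have "\<dots> = (\<Sum>k\<le>n. \<integral>\<^sup>+s. f k * indicator (Iv k) s \<partial>lborel)"
    by (rule nn_integral_sum) (auto simp: Iv_def)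
  also have "\<dots> = (\<Sum>k\<le>n. ennreal (len n u k) * f k)"
    by (intro sum.cong refl) (auto simp: nn_integral_cmult_indicator Iv_def emeasure_Iv[symmetric] mult.commute)
  finally show ?thesis .
qed

lemma integral2_cnt:
  fixes H :: "nat \<Rightarrow> nat \<Rightarrow> ennreal"
  shows "(\<integral>\<^sup>+s. indicator II s * (\<integral>\<^sup>+t. indicator II t * H (cnt n s u) (cnt n t u) \<partial>lborel) \<partial>lborel)
     = (\<Sum>k\<le>n. \<Sum>l\<le>n. ennreal (len n u k) * ennreal (len n u l) * H k l)"
proof -
  have "(\<integral>\<^sup>+s. indicator II s * (\<integral>\<^sup>+t. indicator II t * H (cnt n s u) (cnt n t u) \<partial>lborel) \<partial>lborel)
      = (\<integral>\<^sup>+s. indicator II s * (\<lambda>k. \<Sum>l\<le>n. ennreal (len n u l) * H k l) (cnt n s u) \<partial>lborel)"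
    by (rule nn_integral_cong) (simp only: integral_cnt[of "H (cnt n _ u)"])
  also have "\<dots> = (\<Sum>k\<le>n. ennreal (len n u k) * (\<Sum>l\<le>n. ennreal (len n u l) * H k l))"
    by (rule integral_cnt)
  also have "\<dots> = (\<Sum>k\<le>n. \<Sum>l\<le>n. ennreal (len n u k) * ennreal (len n u l) * H k l)"
    by (simp add: sum_distrib_left mult.assoc)
  finally show ?thesis .
qed

end


fun mm :: "nat \<Rightarrow> nat \<Rightarrow> nat \<Rightarrow> nat" where
  "mm 0 \<alpha> \<beta> = (if \<alpha> = 0 \<and> \<beta> = 0 then 1 else 0)"
| "mm (Suc n) \<alpha> \<beta> = (case \<alpha> of 0 \<Rightarrow> 0 | Suc \<alpha>' \<Rightarrow> mm n \<alpha>' \<beta>) + (case \<beta> of 0 \<Rightarrow> 0 | Suc \<beta>' \<Rightarrow> mm n \<alpha> \<beta>') + mm n \<alpha> \<beta>"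

lemma mm_zero: "n < \<alpha> + \<beta> \<Longrightarrow> mm n \<alpha> \<beta> = 0"
proof (induction n arbitrary: \<alpha> \<beta>)
  case 0 then show ?case by simp
next
  case (Suc n) then show ?case by (auto split: nat.splits)
qed

lemma sum_shift0:
  fixes f :: "nat \<Rightarrow> real"
  assumes "f N = 0"
  shows "(\<Sum>\<alpha>\<le>N. (case \<alpha> of 0 \<Rightarrow> 0 | Suc \<alpha>' \<Rightarrow> f \<alpha>')) = (\<Sum>\<alpha>\<le>N. f \<alpha>)"
proof -
  have "(\<Sum>\<alpha>\<le>N. (case \<alpha> of 0 \<Rightarrow> 0 | Suc \<alpha>' \<Rightarrow> f \<alpha>')) = (\<Sum>\<alpha><N. f \<alpha>)"
    by (subst sum.atMost_shift) simp
  also have "\<dots> = (\<Sum>\<alpha>\<le>N. f \<alpha>)"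
    using assms by (simp add: lessThan_Suc_atMost[symmetric])
  finally show ?thesis .
qed

lemma step_sum:
  fixes a b c :: real and G :: "nat \<Rightarrow> nat \<Rightarrow> real"
  assumes N: "Suc n \<le> N"
  shows "(\<Sum>\<alpha>\<le>N. \<Sum>\<beta>\<le>N. real (mm n \<alpha> \<beta>) * (a^\<alpha> * b^\<beta> * c^(n - \<alpha> - \<beta>)) *
            (a * G (Suc \<alpha>) (Suc (\<alpha> + \<beta>)) + b * G \<alpha> (Suc (\<alpha> + \<beta>)) + c * G \<alpha> (\<alpha> + \<beta>)))
       = (\<Sum>\<alpha>\<le>N. \<Sum>\<beta>\<le>N. real (mm (Suc n) \<alpha> \<beta>) * (a^\<alpha> * b^\<beta> * c^(Suc n - \<alpha> - \<beta>)) * G \<alpha> (\<alpha> + \<beta>))"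
proof -
  let ?W = "\<lambda>n \<alpha> \<beta>. a^\<alpha> * b^\<beta> * c^(n - \<alpha> - \<beta>)"
  have T1: "(\<Sum>\<alpha>\<le>N. \<Sum>\<beta>\<le>N. real (case \<alpha> of 0 \<Rightarrow> 0 | Suc \<alpha>' \<Rightarrow> mm n \<alpha>' \<beta>) * ?W (Suc n) \<alpha> \<beta> * G \<alpha> (\<alpha> + \<beta>))
      = (\<Sum>\<alpha>\<le>N. \<Sum>\<beta>\<le>N. real (mm n \<alpha> \<beta>) * ?W n \<alpha> \<beta> * (a * G (Suc \<alpha>) (Suc (\<alpha> + \<beta>))))"
  proof -
    have "(\<Sum>\<alpha>\<le>N. \<Sum>\<beta>\<le>N. real (case \<alpha> of 0 \<Rightarrow> 0 | Suc \<alpha>' \<Rightarrow> mm n \<alpha>' \<beta>) * ?W (Suc n) \<alpha> \<beta> * G \<alpha> (\<alpha> + \<beta>))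
        = (\<Sum>\<alpha>\<le>N. (case \<alpha> of 0 \<Rightarrow> 0 | Suc \<alpha>' \<Rightarrow> (\<Sum>\<beta>\<le>N. real (mm n \<alpha>' \<beta>) * ?W (Suc n) (Suc \<alpha>') \<beta> * G (Suc \<alpha>') (Suc \<alpha>' + \<beta>))))"
      by (intro sum.cong refl) (auto split: nat.splits)
    also have "\<dots> = (\<Sum>\<alpha>\<le>N. (\<Sum>\<beta>\<le>N. real (mm n \<alpha> \<beta>) * ?W (Suc n) (Suc \<alpha>) \<beta> * G (Suc \<alpha>) (Suc \<alpha> + \<beta>)))"
      by (rule sum_shift0) (use N in \<open>simp add: mm_zero\<close>)
    also have "\<dots> = (\<Sum>\<alpha>\<le>N. \<Sum>\<beta>\<le>N. real (mm n \<alpha> \<beta>) * ?W n \<alpha> \<beta> * (a * G (Suc \<alpha>) (Suc (\<alpha> + \<beta>))))"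
    proof (intro sum.cong refl)
      fix \<alpha> \<beta>
      show "real (mm n \<alpha> \<beta>) * ?W (Suc n) (Suc \<alpha>) \<beta> * G (Suc \<alpha>) (Suc \<alpha> + \<beta>)
          = real (mm n \<alpha> \<beta>) * ?W n \<alpha> \<beta> * (a * G (Suc \<alpha>) (Suc (\<alpha> + \<beta>)))"
        by simp
    qed
    finally show ?thesis .
  qed
  have T2: "(\<Sum>\<alpha>\<le>N. \<Sum>\<beta>\<le>N. real (case \<beta> of 0 \<Rightarrow> 0 | Suc \<beta>' \<Rightarrow> mm n \<alpha> \<beta>') * ?W (Suc n) \<alpha> \<beta> * G \<alpha> (\<alpha> + \<beta>))
      = (\<Sum>\<alpha>\<le>N. \<Sum>\<beta>\<le>N. real (mm n \<alpha> \<beta>) * ?W n \<alpha> \<beta> * (b * G \<alpha> (Suc (\<alpha> + \<beta>))))"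
  proof (rule sum.cong[OF refl])
    fix \<alpha> assume "\<alpha> \<in> {..N}"
    have "(\<Sum>\<beta>\<le>N. real (case \<beta> of 0 \<Rightarrow> 0 | Suc \<beta>' \<Rightarrow> mm n \<alpha> \<beta>') * ?W (Suc n) \<alpha> \<beta> * G \<alpha> (\<alpha> + \<beta>))
        = (\<Sum>\<beta>\<le>N. (case \<beta> of 0 \<Rightarrow> 0 | Suc \<beta>' \<Rightarrow> real (mm n \<alpha> \<beta>') * ?W (Suc n) \<alpha> (Suc \<beta>') * G \<alpha> (\<alpha> + Suc \<beta>')))"
      by (intro sum.cong refl) (auto split: nat.splits)
    also have "\<dots> = (\<Sum>\<beta>\<le>N. real (mm n \<alpha> \<beta>) * ?W (Suc n) \<alpha> (Suc \<beta>) * G \<alpha> (\<alpha> + Suc \<beta>))"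
      by (rule sum_shift0) (use N in \<open>simp add: mm_zero\<close>)
    also have "\<dots> = (\<Sum>\<beta>\<le>N. real (mm n \<alpha> \<beta>) * ?W n \<alpha> \<beta> * (b * G \<alpha> (Suc (\<alpha> + \<beta>))))"
      by (intro sum.cong refl) simp
    finally show "(\<Sum>\<beta>\<le>N. real (case \<beta> of 0 \<Rightarrow> 0 | Suc \<beta>' \<Rightarrow> mm n \<alpha> \<beta>') * ?W (Suc n) \<alpha> \<beta> * G \<alpha> (\<alpha> + \<beta>))
        = (\<Sum>\<beta>\<le>N. real (mm n \<alpha> \<beta>) * ?W n \<alpha> \<beta> * (b * G \<alpha> (Suc (\<alpha> + \<beta>))))" .
  qed
  have T3: "(\<Sum>\<alpha>\<le>N. \<Sum>\<beta>\<le>N. real (mm n \<alpha> \<beta>) * ?W (Suc n) \<alpha> \<beta> * G \<alpha> (\<alpha> + \<beta>))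
      = (\<Sum>\<alpha>\<le>N. \<Sum>\<beta>\<le>N. real (mm n \<alpha> \<beta>) * ?W n \<alpha> \<beta> * (c * G \<alpha> (\<alpha> + \<beta>)))"
  proof (intro sum.cong refl)
    fix \<alpha> \<beta>
    show "real (mm n \<alpha> \<beta>) * ?W (Suc n) \<alpha> \<beta> * G \<alpha> (\<alpha> + \<beta>) = real (mm n \<alpha> \<beta>) * ?W n \<alpha> \<beta> * (c * G \<alpha> (\<alpha> + \<beta>))"
    proof (cases "\<alpha> + \<beta> \<le> n")
      case True
      then have "Suc n - \<alpha> - \<beta> = Suc (n - \<alpha> - \<beta>)" by simp
      then show ?thesis by simp
    next
      case False then show ?thesis by (simp add: mm_zero)
    qed
  qed
  have "(\<Sum>\<alpha>\<le>N. \<Sum>\<beta>\<le>N. real (mm (Suc n) \<alpha> \<beta>) * ?W (Suc n) \<alpha> \<beta> * G \<alpha> (\<alpha> + \<beta>))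
     = (\<Sum>\<alpha>\<le>N. \<Sum>\<beta>\<le>N. real (case \<alpha> of 0 \<Rightarrow> 0 | Suc \<alpha>' \<Rightarrow> mm n \<alpha>' \<beta>) * ?W (Suc n) \<alpha> \<beta> * G \<alpha> (\<alpha> + \<beta>))
     + (\<Sum>\<alpha>\<le>N. \<Sum>\<beta>\<le>N. real (case \<beta> of 0 \<Rightarrow> 0 | Suc \<beta>' \<Rightarrow> mm n \<alpha> \<beta>') * ?W (Suc n) \<alpha> \<beta> * G \<alpha> (\<alpha> + \<beta>))
     + (\<Sum>\<alpha>\<le>N. \<Sum>\<beta>\<le>N. real (mm n \<alpha> \<beta>) * ?W (Suc n) \<alpha> \<beta> * G \<alpha> (\<alpha> + \<beta>))"
    by (simp only: mm.simps of_nat_add distrib_right sum.distrib)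
  also have "\<dots> = (\<Sum>\<alpha>\<le>N. \<Sum>\<beta>\<le>N. real (mm n \<alpha> \<beta>) * ?W n \<alpha> \<beta> *
            (a * G (Suc \<alpha>) (Suc (\<alpha> + \<beta>)) + b * G \<alpha> (Suc (\<alpha> + \<beta>)) + c * G \<alpha> (\<alpha> + \<beta>)))"
    unfolding T1 T2 T3 by (simp only: distrib_left sum.distrib)
  finally show ?thesis by simp
qed


abbreviation "UU \<equiv> uniform_measure lborel II"

lemma emeasure_II: "emeasure lborel II = 1"
  by (simp add: emeasure_lborel_Icc)

lemma prob_UU: "prob_space UU"
  by (rule prob_space_uniform_measure) (simp_all add: emeasure_II)

lemma sets_UU[measurable_cong]: "sets UU = sets borel"
  by simp

lemma unif_sample_eq: "unif_sample n = PiM {..<n} (\<lambda>_. UU)"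
  unfolding unif_sample_def ..

lemma meas_cnt: "(\<lambda>u. cnt n s u) \<in> measurable (PiM {..<m} (\<lambda>_. UU)) (count_space UNIV)"
  if "n \<le> m"
proof -
  show ?thesis unfolding cnt_sum by measurable (use that in auto)
qed

lemma meas_G[measurable]: "n \<le> m \<Longrightarrow> (\<lambda>u. ennreal (G (cnt n lo u) (cnt n hi u))) \<in> borel_measurable (PiM {..<m} (\<lambda>_. UU))"
  using meas_cnt[of n m lo] meas_cnt[of n m hi] by measurable


lemma inner:
  fixes G :: "nat \<Rightarrow> nat \<Rightarrow> real"
  assumes lh: "lo \<le> hi" "lo \<in> II" "hi \<in> II" and G: "\<And>x y. 0 \<le> G x y"
  shows "(\<integral>\<^sup>+y. ennreal (G (A + (if y \<le> lo then 1 else 0)) (C + (if y \<le> hi then 1 else 0))) \<partial>UU)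
     = ennreal ((lo + 1/2) * G (Suc A) (Suc C) + (hi - lo) * G A (Suc C) + (1/2 - hi) * G A C)"
proof -
  let ?f = "\<lambda>y. ennreal (G (A + (if y \<le> lo then 1 else 0)) (C + (if y \<le> hi then 1 else 0)))"
  have "(\<integral>\<^sup>+y. ?f y \<partial>UU) = (\<integral>\<^sup>+y. ?f y * indicator II y \<partial>lborel) / emeasure lborel II"
    by (rule nn_integral_uniform_measure) auto
  also have "\<dots> = (\<integral>\<^sup>+y. ?f y * indicator II y \<partial>lborel)"
    by (simp add: emeasure_II divide_ennreal_def)
  also have "\<dots> = (\<integral>\<^sup>+y. ennreal (G (Suc A) (Suc C)) * indicator {-1/2..lo} y
        + ennreal (G A (Suc C)) * indicator {lo<..hi} y + ennreal (G A C) * indicator {hi<..1/2} y \<partial>lborel)"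
    using lh by (intro nn_integral_cong) (auto simp: indicator_def)
  also have "\<dots> = (\<integral>\<^sup>+y. ennreal (G (Suc A) (Suc C)) * indicator {-1/2..lo} y \<partial>lborel)
        + (\<integral>\<^sup>+y. ennreal (G A (Suc C)) * indicator {lo<..hi} y \<partial>lborel)
        + (\<integral>\<^sup>+y. ennreal (G A C) * indicator {hi<..1/2} y \<partial>lborel)"
    by (simp add: nn_integral_add)
  also have "\<dots> = ennreal (G (Suc A) (Suc C)) * ennreal (lo + 1/2) + ennreal (G A (Suc C)) * ennreal (hi - lo)
       + ennreal (G A C) * ennreal (1/2 - hi)"
    using lh by (simp add: nn_integral_cmult_indicator emeasure_lborel_Icc emeasure_lborel_Ioc)
  also have "\<dots> = ennreal ((lo + 1/2) * G (Suc A) (Suc C) + (hi - lo) * G A (Suc C) + (1/2 - hi) * G A C)"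
  proof -
    have a: "0 \<le> lo + 1/2" "0 \<le> hi - lo" "0 \<le> 1/2 - hi" using lh by auto
    let ?x = "(lo + 1/2) * G (Suc A) (Suc C)" and ?y = "(hi - lo) * G A (Suc C)" and ?z = "(1/2 - hi) * G A C"
    have nn: "0 \<le> ?x" "0 \<le> ?y" "0 \<le> ?z" using a G by auto
    have "ennreal (?x + ?y + ?z) = ennreal ?x + ennreal ?y + ennreal ?z"
      using nn by (simp add: ennreal_plus)
    also have "\<dots> = ennreal (G (Suc A) (Suc C)) * ennreal (lo + 1/2) + ennreal (G A (Suc C)) * ennreal (hi - lo)
       + ennreal (G A C) * ennreal (1/2 - hi)"
      using a G by (simp add: ennreal_mult mult.commute)
    finally show ?thesis by simp
  qed
  finally show ?thesis .
qed

lemma cnt_Suc_upd: "cnt (Suc n) s (x(n := y)) = cnt n s x + (if y \<le> s then 1 else 0)"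
  unfolding cnt_sum by (simp add: sum.lessThan_Suc)

lemma cnt_0[simp]: "cnt 0 s u = 0"
  unfolding cnt_def by simp

lemma En:
  assumes lh: "lo \<le> hi" "lo \<in> II" "hi \<in> II"
  shows "n \<le> N \<Longrightarrow> (\<forall>x y. 0 \<le> G x y) \<Longrightarrow> (\<integral>\<^sup>+u. ennreal (G (cnt n lo u) (cnt n hi u)) \<partial>unif_sample n)
     = ennreal (\<Sum>\<alpha>\<le>N. \<Sum>\<beta>\<le>N. real (mm n \<alpha> \<beta>) * ((lo+1/2)^\<alpha> * (hi-lo)^\<beta> * (1/2-hi)^(n-\<alpha>-\<beta>)) * G \<alpha> (\<alpha>+\<beta>))"
proof (induction n arbitrary: G)
  case 0
  have e: "real (mm 0 \<alpha> \<beta>) * ((lo+1/2)^\<alpha> * (hi-lo)^\<beta> * (1/2-hi)^(0-\<alpha>-\<beta>)) * G \<alpha> (\<alpha>+\<beta>)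
      = (if \<alpha> = 0 \<and> \<beta> = 0 then G 0 0 else 0)" for \<alpha> \<beta> by simp
  have i: "(\<Sum>\<beta>\<le>N. if \<alpha> = 0 \<and> \<beta> = 0 then G 0 0 else 0) = (if \<alpha> = 0 then G 0 0 else 0)" for \<alpha> :: nat
    by (cases \<alpha>) (simp_all add: sum.delta)
  have "(\<Sum>\<alpha>\<le>N. \<Sum>\<beta>\<le>N. real (mm 0 \<alpha> \<beta>) * ((lo+1/2)^\<alpha> * (hi-lo)^\<beta> * (1/2-hi)^(0-\<alpha>-\<beta>)) * G \<alpha> (\<alpha>+\<beta>))
      = G 0 0" unfolding e i by (simp add: sum.delta)
  then show ?case by (simp add: unif_sample_def PiM_empty)
next
  case (Suc n)
  interpret product_sigma_finite "\<lambda>_::nat. UU"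
    using prob_space_imp_sigma_finite[OF prob_UU] by (simp add: product_sigma_finite_def)
  define TG where "TG A C = (lo + 1/2) * G (Suc A) (Suc C) + (hi - lo) * G A (Suc C) + (1/2 - hi) * G A C" for A C
  have TG0: "\<forall>x y. 0 \<le> TG x y" using Suc.prems lh unfolding TG_def by (auto intro!: add_nonneg_nonneg mult_nonneg_nonneg)
  have "(\<integral>\<^sup>+u. ennreal (G (cnt (Suc n) lo u) (cnt (Suc n) hi u)) \<partial>unif_sample (Suc n))
      = (\<integral>\<^sup>+u. ennreal (G (cnt (Suc n) lo u) (cnt (Suc n) hi u)) \<partial>PiM (insert n {..<n}) (\<lambda>_. UU))"
    by (simp add: unif_sample_def lessThan_Suc)
  also have "\<dots> = (\<integral>\<^sup>+x. (\<integral>\<^sup>+y. ennreal (G (cnt (Suc n) lo (x(n:=y))) (cnt (Suc n) hi (x(n:=y)))) \<partial>UU) \<partial>PiM {..<n} (\<lambda>_. UU))"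
    using meas_G[of "Suc n" "Suc n" G lo hi]
    by (intro product_nn_integral_insert) (auto simp: lessThan_Suc)
  also have "\<dots> = (\<integral>\<^sup>+x. ennreal (TG (cnt n lo x) (cnt n hi x)) \<partial>PiM {..<n} (\<lambda>_. UU))"
    unfolding cnt_Suc_upd TG_def using lh Suc.prems by (intro nn_integral_cong inner) auto
  also have "\<dots> = ennreal (\<Sum>\<alpha>\<le>N. \<Sum>\<beta>\<le>N. real (mm n \<alpha> \<beta>) * ((lo+1/2)^\<alpha> * (hi-lo)^\<beta> * (1/2-hi)^(n-\<alpha>-\<beta>)) * TG \<alpha> (\<alpha>+\<beta>))"
    using Suc.IH[of TG] Suc.prems TG0 by (simp add: unif_sample_def)
  also have "\<dots> = ennreal (\<Sum>\<alpha>\<le>N. \<Sum>\<beta>\<le>N. real (mm (Suc n) \<alpha> \<beta>) * ((lo+1/2)^\<alpha> * (hi-lo)^\<beta> * (1/2-hi)^(Suc n-\<alpha>-\<beta>)) * G \<alpha> (\<alpha>+\<beta>))"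
  proof -
    have "Suc n \<le> N" using Suc.prems by simp
    then show ?thesis unfolding TG_def using step_sum[of n N "lo + 1/2" "hi - lo" "1/2 - hi" G] by (simp only:)
  qed
  finally show ?case .
qed


lemma beta_alg:
  fixes A B F L d P Q :: real
  assumes F: "F \<noteq> 0" and P: "0 \<le> P" and Q: "0 \<le> Q"
  shows "d * (A * B / F * L) - ((P + 1) * A) * B / ((P + Q + 2) * F) * (d * L)
       = A * ((Q + 1) * B) / ((P + Q + 2) * F) * (d * L)"
proof -
  define S where "S = P + Q + 2"
  have S: "S \<noteq> 0" using P Q unfolding S_def by linarith
  define X where "X = d * A * B * L / F"
  have e1: "d * (A * B / F * L) = X" unfolding X_def by simp
  have e2: "((P + 1) * A) * B / (S * F) * (d * L) = (P + 1) / S * X" unfolding X_def by simp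
  have e3: "A * ((Q + 1) * B) / (S * F) * (d * L) = (Q + 1) / S * X" unfolding X_def by simp
  have e4: "X - (P + 1) / S * X = (Q + 1) / S * X"
  proof -
    have "(Q + 1) / S = (S - (P + 1)) / S" unfolding S_def by simp
    also have "\<dots> = 1 - (P + 1) / S" using S by (simp add: diff_divide_distrib)
    finally have h: "(Q + 1) / S = 1 - (P + 1) / S" .
    show ?thesis by (simp only: h left_diff_distrib mult_1)
  qed
  show ?thesis using e1 e2 e3 e4 unfolding S_def by simp
qed

lemma beta_has_integral:
  fixes x y :: real
  assumes xy: "x \<le> y"
  shows "((\<lambda>t. (t - x)^p * (y - t)^q) has_integral
           (fact p * fact q / fact (p + q + 1) * (y - x)^(p + q + 1))) {x..y}"
proof (induction q arbitrary: p)
  case 0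
  have "((\<lambda>t. (t - x)^p) has_integral ((y - x)^(Suc p) / real (Suc p) - (x - x)^(Suc p) / real (Suc p))) {x..y}"
  proof (rule fundamental_theorem_of_calculus[OF xy])
    fix t assume "t \<in> {x..y}"
    show "((\<lambda>t. (t - x)^(Suc p) / real (Suc p)) has_vector_derivative (t - x)^p) (at t within {x..y})"
      unfolding has_real_derivative_iff_has_vector_derivative[symmetric]
      by (auto intro!: derivative_eq_intros simp del: of_nat_Suc) (cases p, auto simp: field_simps)
  qed
  then have h0: "((\<lambda>t. (t - x)^p) has_integral ((y - x)^(Suc p) / real (Suc p))) {x..y}" by simp
  have fp: "(fact p :: real) \<noteq> 0" by simp
  have "fact p * fact 0 / fact (p + 0 + 1) * (y - x)^(p + 0 + 1) = (y - x)^(Suc p) / real (Suc p)"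
    using fp by (simp add: fact_Suc del: of_nat_Suc)
  then show ?case using h0 by simp
next
  case (Suc q)
  have eq: "(\<lambda>t. (t - x)^p * (y - t)^(Suc q)) = (\<lambda>t. (y - x) * ((t - x)^p * (y - t)^q) - (t - x)^(Suc p) * (y - t)^q)"
    by (rule ext) (simp add: algebra_simps)
  have h: "((\<lambda>t. (y - x) * ((t - x)^p * (y - t)^q) - (t - x)^(Suc p) * (y - t)^q) has_integral
      ((y - x) * (fact p * fact q / fact (p + q + 1) * (y - x)^(p + q + 1))
        - fact (Suc p) * fact q / fact (Suc p + q + 1) * (y - x)^(Suc p + q + 1))) {x..y}"
    by (rule has_integral_diff[OF has_integral_mult_right[OF Suc.IH[of p]] Suc.IH[of "Suc p"]])
  have v: "(y - x) * (fact p * fact q / fact (p + q + 1) * (y - x)^(p + q + 1))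
        - fact (Suc p) * fact q / fact (Suc p + q + 1) * (y - x)^(Suc p + q + 1)
      = fact p * fact (Suc q) / fact (p + Suc q + 1) * (y - x)^(p + Suc q + 1)"
  proof -
    have f1: "(fact (Suc (p + q + 1)) :: real) = real (Suc (p + q + 1)) * fact (p + q + 1)"
      by (rule fact_Suc)
    have f2: "(fact (Suc p + q + 1) :: real) = fact (Suc (p + q + 1))" "(fact (p + Suc q + 1) :: real) = fact (Suc (p + q + 1))"
      by simp_all
    have f3: "(fact (Suc p) :: real) = real (Suc p) * fact p" "(fact (Suc q) :: real) = real (Suc q) * fact q"
      by simp_all
    have pw: "(y - x)^(Suc p + q + 1) = (y - x) * (y - x)^(p + q + 1)" "(y - x)^(p + Suc q + 1) = (y - x) * (y - x)^(p + q + 1)"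
      by simp_all
    have fp: "(fact (p + q + 1) :: real) > 0" by simp
    have r: "real (Suc p) = real p + 1" "real (Suc q) = real q + 1" "real (Suc (p + q + 1)) = real p + real q + 2"
      by simp_all
    show ?thesis unfolding f2 f1 f3 pw r using beta_alg[of "fact (p + q + 1)" "real p" "real q"] fp by simp
  qed
  show ?case using h unfolding eq v .
qed

lemma beta_nn:
  fixes x y :: real
  assumes xy: "x \<le> y"
  shows "(\<integral>\<^sup>+t. ennreal ((t - x)^p * (y - t)^q) * indicator {x..y} t \<partial>lborel)
       = ennreal (fact p * fact q / fact (p + q + 1) * (y - x)^(p + q + 1))"
  by (rule nn_integral_has_integral_lebesgue'[OF _ beta_has_integral[OF xy]]) auto


lemma fact_pos_real: "(fact k :: real) > 0" by simp

lemma dir1: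
  "(\<integral>\<^sup>+s. indicator II s * (\<integral>\<^sup>+t. indicator {s..1/2} t * ennreal ((s+1/2)^\<alpha> * (t-s)^\<beta> * (1/2-t)^\<gamma>) \<partial>lborel) \<partial>lborel)
   = ennreal (fact \<alpha> * fact \<beta> * fact \<gamma> / fact (\<alpha>+\<beta>+\<gamma>+2))"
proof -
  define C :: real where "C = fact \<beta> * fact \<gamma> / fact (\<beta>+\<gamma>+1)"
  have C0: "0 \<le> C" unfolding C_def by simp
  have inner: "(\<integral>\<^sup>+t. indicator {s..1/2} t * ennreal ((s+1/2)^\<alpha> * (t-s)^\<beta> * (1/2-t)^\<gamma>) \<partial>lborel)
      = ennreal ((s+1/2)^\<alpha> * (C * (1/2 - s)^(\<beta>+\<gamma>+1)))" if s: "s \<in> II" for s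
  proof -
    have a0: "0 \<le> (s+1/2)^\<alpha>" using s by simp
    have "(\<integral>\<^sup>+t. indicator {s..1/2} t * ennreal ((s+1/2)^\<alpha> * (t-s)^\<beta> * (1/2-t)^\<gamma>) \<partial>lborel)
        = (\<integral>\<^sup>+t. ennreal ((s+1/2)^\<alpha>) * (ennreal ((t-s)^\<beta> * (1/2-t)^\<gamma>) * indicator {s..1/2} t) \<partial>lborel)"
      using a0 by (intro nn_integral_cong) (auto simp: indicator_def ennreal_mult mult_ac)
    also have "\<dots> = ennreal ((s+1/2)^\<alpha>) * (\<integral>\<^sup>+t. ennreal ((t-s)^\<beta> * (1/2-t)^\<gamma>) * indicator {s..1/2} t \<partial>lborel)"
      by (rule nn_integral_cmult) measurable
    also have "\<dots> = ennreal ((s+1/2)^\<alpha>) * ennreal (C * (1/2 - s)^(\<beta>+\<gamma>+1))"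
      using beta_nn[of s "1/2" \<beta> \<gamma>] s unfolding C_def by simp
    also have "\<dots> = ennreal ((s+1/2)^\<alpha> * (C * (1/2 - s)^(\<beta>+\<gamma>+1)))"
      using a0 C0 s by (simp add: ennreal_mult)
    finally show ?thesis .
  qed
  have "(\<integral>\<^sup>+s. indicator II s * (\<integral>\<^sup>+t. indicator {s..1/2} t * ennreal ((s+1/2)^\<alpha> * (t-s)^\<beta> * (1/2-t)^\<gamma>) \<partial>lborel) \<partial>lborel)
      = (\<integral>\<^sup>+s. ennreal C * (ennreal ((s - (-1/2))^\<alpha> * (1/2 - s)^(\<beta>+\<gamma>+1)) * indicator {-1/2..1/2} s) \<partial>lborel)"
  proof (intro nn_integral_cong)
    fix s :: real
    show "indicator II s * (\<integral>\<^sup>+t. indicator {s..1/2} t * ennreal ((s+1/2)^\<alpha> * (t-s)^\<beta> * (1/2-t)^\<gamma>) \<partial>lborel)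
        = ennreal C * (ennreal ((s - (-1/2))^\<alpha> * (1/2 - s)^(\<beta>+\<gamma>+1)) * indicator {-1/2..1/2} s)"
    proof (cases "s \<in> II")
      case True
      have p1: "0 \<le> (s+1/2)^\<alpha>" "0 \<le> (1/2 - s)^(\<beta>+\<gamma>+1)" using True by simp_all
      have "ennreal ((s+1/2)^\<alpha> * (C * (1/2 - s)^(\<beta>+\<gamma>+1)))
          = ennreal C * ennreal ((s - (-1/2))^\<alpha> * (1/2 - s)^(\<beta>+\<gamma>+1))"
      proof -
        have pp: "0 \<le> (s - (-1/2))^\<alpha> * (1/2 - s)^(\<beta>+\<gamma>+1)" using p1 by simp
        have "ennreal C * ennreal ((s - (-1/2))^\<alpha> * (1/2 - s)^(\<beta>+\<gamma>+1))
            = ennreal (C * ((s - (-1/2))^\<alpha> * (1/2 - s)^(\<beta>+\<gamma>+1)))"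
          using ennreal_mult[OF C0 pp] by simp
        moreover have "C * ((s - (-1/2))^\<alpha> * (1/2 - s)^(\<beta>+\<gamma>+1)) = (s+1/2)^\<alpha> * (C * (1/2 - s)^(\<beta>+\<gamma>+1))"
          by simp
        ultimately show ?thesis by (simp only:)
      qed
      then show ?thesis using True by (simp add: inner)
    next
      case False
      then show ?thesis by simp
    qed
  qed
  also have "\<dots> = ennreal C * (\<integral>\<^sup>+s. ennreal ((s - (-1/2))^\<alpha> * (1/2 - s)^(\<beta>+\<gamma>+1)) * indicator {-1/2..1/2} s \<partial>lborel)"
    by (rule nn_integral_cmult) measurable
  also have "\<dots> = ennreal C * ennreal (fact \<alpha> * fact (\<beta>+\<gamma>+1) / fact (\<alpha> + (\<beta>+\<gamma>+1) + 1) * (1/2 - (-1/2))^(\<alpha> + (\<beta>+\<gamma>+1) + 1))"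
    using beta_nn[of "-1/2" "1/2" \<alpha> "\<beta>+\<gamma>+1"] by simp
  also have "\<dots> = ennreal (fact \<alpha> * fact \<beta> * fact \<gamma> / fact (\<alpha>+\<beta>+\<gamma>+2))"
  proof -
    have i: "\<alpha> + (\<beta>+\<gamma>+1) + 1 = \<alpha>+\<beta>+\<gamma>+2" by simp
    have "C * (fact \<alpha> * fact (\<beta>+\<gamma>+1) / fact (\<alpha> + (\<beta>+\<gamma>+1) + 1) * (1/2 - (-1/2::real))^(\<alpha> + (\<beta>+\<gamma>+1) + 1))
        = fact \<alpha> * fact \<beta> * fact \<gamma> / fact (\<alpha>+\<beta>+\<gamma>+2)"
    proof -
      have one: "(1/2 - (-1/2::real))^(\<alpha>+\<beta>+\<gamma>+2) = 1" by simp
      have g: "x / F1 * (a * F1 / F2 * 1) = a * x / F2" if "F1 \<noteq> 0" for x a F1 F2 :: real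
        using that by (simp add: field_simps)
      have "C * (fact \<alpha> * fact (\<beta>+\<gamma>+1) / fact (\<alpha>+\<beta>+\<gamma>+2) * (1/2 - (-1/2::real))^(\<alpha>+\<beta>+\<gamma>+2))
          = fact \<alpha> * (fact \<beta> * fact \<gamma>) / fact (\<alpha>+\<beta>+\<gamma>+2)"
        unfolding one C_def by (rule g) simp
      then show ?thesis unfolding i by (simp add: mult_ac)
    qed
    then show ?thesis using C0 by (simp add: ennreal_mult[symmetric])
  qed
  finally show ?thesis .
qed

lemma dir2:
  "(\<integral>\<^sup>+s. indicator II s * (\<integral>\<^sup>+t. indicator {-1/2..<s} t * ennreal ((t+1/2)^\<alpha> * (s-t)^\<beta> * (1/2-s)^\<gamma>) \<partial>lborel) \<partial>lborel)
   = ennreal (fact \<alpha> * fact \<beta> * fact \<gamma> / fact (\<alpha>+\<beta>+\<gamma>+2))"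
proof -
  define D :: real where "D = fact \<alpha> * fact \<beta> / fact (\<alpha>+\<beta>+1)"
  have D0: "0 \<le> D" unfolding D_def by simp
  have inner: "(\<integral>\<^sup>+t. indicator {-1/2..<s} t * ennreal ((t+1/2)^\<alpha> * (s-t)^\<beta> * (1/2-s)^\<gamma>) \<partial>lborel)
      = ennreal ((1/2-s)^\<gamma> * (D * (s + 1/2)^(\<alpha>+\<beta>+1)))" if s: "s \<in> II" for s
  proof -
    have a0: "0 \<le> (1/2-s)^\<gamma>" using s by simp
    have "(\<integral>\<^sup>+t. indicator {-1/2..<s} t * ennreal ((t+1/2)^\<alpha> * (s-t)^\<beta> * (1/2-s)^\<gamma>) \<partial>lborel)
        = (\<integral>\<^sup>+t. ennreal ((1/2-s)^\<gamma>) * (ennreal ((t - (-1/2))^\<alpha> * (s-t)^\<beta>) * indicator {-1/2..s} t) \<partial>lborel)"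
    proof (rule nn_integral_cong_AE)
      show "AE t in lborel. indicator {-1/2..<s} t * ennreal ((t+1/2)^\<alpha> * (s-t)^\<beta> * (1/2-s)^\<gamma>)
          = ennreal ((1/2-s)^\<gamma>) * (ennreal ((t - (-1/2))^\<alpha> * (s-t)^\<beta>) * indicator {-1/2..s} t)"
      proof (rule eventually_mono[OF AE_lborel_singleton[of s]])
        fix t :: real assume ts: "t \<noteq> s"
        show "indicator {-1/2..<s} t * ennreal ((t+1/2)^\<alpha> * (s-t)^\<beta> * (1/2-s)^\<gamma>)
          = ennreal ((1/2-s)^\<gamma>) * (ennreal ((t - (-1/2))^\<alpha> * (s-t)^\<beta>) * indicator {-1/2..s} t)"
        proof (cases "t \<in> {-1/2..<s}")
          case True
          have p: "0 \<le> (t+1/2)^\<alpha> * (s-t)^\<beta>" using True by simp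
          have "ennreal ((t+1/2)^\<alpha> * (s-t)^\<beta> * (1/2-s)^\<gamma>) = ennreal ((1/2-s)^\<gamma>) * ennreal ((t+1/2)^\<alpha> * (s-t)^\<beta>)"
            using ennreal_mult[OF a0 p] by (simp add: mult_ac)
          then show ?thesis using True by simp
        next
          case False
          then have "t \<notin> {-1/2..s}" using ts by auto
          then show ?thesis using False by simp
        qed
      qed
    qed
    also have "\<dots> = ennreal ((1/2-s)^\<gamma>) * (\<integral>\<^sup>+t. ennreal ((t - (-1/2))^\<alpha> * (s-t)^\<beta>) * indicator {-1/2..s} t \<partial>lborel)"
      by (rule nn_integral_cmult) measurable
    also have "\<dots> = ennreal ((1/2-s)^\<gamma>) * ennreal (D * (s - (-1/2))^(\<alpha>+\<beta>+1))"
      using beta_nn[of "-1/2" s \<alpha> \<beta>] s unfolding D_def by simp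
    also have "\<dots> = ennreal ((1/2-s)^\<gamma> * (D * (s + 1/2)^(\<alpha>+\<beta>+1)))"
    proof -
      have "0 \<le> D * (s - (-1/2))^(\<alpha>+\<beta>+1)" using D0 s by simp
      then show ?thesis using ennreal_mult[OF a0] by simp
    qed
    finally show ?thesis .
  qed
  have "(\<integral>\<^sup>+s. indicator II s * (\<integral>\<^sup>+t. indicator {-1/2..<s} t * ennreal ((t+1/2)^\<alpha> * (s-t)^\<beta> * (1/2-s)^\<gamma>) \<partial>lborel) \<partial>lborel)
      = (\<integral>\<^sup>+s. ennreal D * (ennreal ((s - (-1/2))^(\<alpha>+\<beta>+1) * (1/2 - s)^\<gamma>) * indicator {-1/2..1/2} s) \<partial>lborel)"
  proof (intro nn_integral_cong)
    fix s :: real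
    show "indicator II s * (\<integral>\<^sup>+t. indicator {-1/2..<s} t * ennreal ((t+1/2)^\<alpha> * (s-t)^\<beta> * (1/2-s)^\<gamma>) \<partial>lborel)
        = ennreal D * (ennreal ((s - (-1/2))^(\<alpha>+\<beta>+1) * (1/2 - s)^\<gamma>) * indicator {-1/2..1/2} s)"
    proof (cases "s \<in> II")
      case True
      have eq: "ennreal ((1/2-s)^\<gamma> * (D * (s + 1/2)^(\<alpha>+\<beta>+1)))
          = ennreal D * ennreal ((s - (-1/2))^(\<alpha>+\<beta>+1) * (1/2 - s)^\<gamma>)"
      proof -
        have pp: "0 \<le> (s - (-1/2))^(\<alpha>+\<beta>+1) * (1/2 - s)^\<gamma>" using True by simp
        have "ennreal D * ennreal ((s - (-1/2))^(\<alpha>+\<beta>+1) * (1/2 - s)^\<gamma>)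
            = ennreal (D * ((s - (-1/2))^(\<alpha>+\<beta>+1) * (1/2 - s)^\<gamma>))"
          using ennreal_mult[OF D0 pp] by simp
        moreover have "D * ((s - (-1/2))^(\<alpha>+\<beta>+1) * (1/2 - s)^\<gamma>) = (1/2-s)^\<gamma> * (D * (s + 1/2)^(\<alpha>+\<beta>+1))"
          by simp
        ultimately show ?thesis by (simp only:)
      qed
      have i1: "indicator II s = (1::ennreal)" "indicator {-1/2..1/2} s = (1::ennreal)" using True by auto
      show ?thesis by (simp only: i1 inner[OF True] mult_1 mult_1_right eq)
    next
      case False
      then show ?thesis by simp
    qed
  qed
  also have "\<dots> = ennreal D * (\<integral>\<^sup>+s. ennreal ((s - (-1/2))^(\<alpha>+\<beta>+1) * (1/2 - s)^\<gamma>) * indicator {-1/2..1/2} s \<partial>lborel)"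
    by (rule nn_integral_cmult) measurable
  also have "\<dots> = ennreal D * ennreal (fact (\<alpha>+\<beta>+1) * fact \<gamma> / fact ((\<alpha>+\<beta>+1) + \<gamma> + 1) * (1/2 - (-1/2))^((\<alpha>+\<beta>+1) + \<gamma> + 1))"
    using beta_nn[of "-1/2" "1/2" "\<alpha>+\<beta>+1" \<gamma>] by simp
  also have "\<dots> = ennreal (fact \<alpha> * fact \<beta> * fact \<gamma> / fact (\<alpha>+\<beta>+\<gamma>+2))"
  proof -
    have i: "(\<alpha>+\<beta>+1) + \<gamma> + 1 = \<alpha>+\<beta>+\<gamma>+2" by simp
    have one: "(1/2 - (-1/2::real))^(\<alpha>+\<beta>+\<gamma>+2) = 1" by simp
    have g: "x / F1 * (F1 * a / F2 * 1) = x * a / F2" if "F1 \<noteq> 0" for x a F1 F2 :: real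
      using that by (simp add: field_simps)
    have "D * (fact (\<alpha>+\<beta>+1) * fact \<gamma> / fact (\<alpha>+\<beta>+\<gamma>+2) * (1/2 - (-1/2::real))^(\<alpha>+\<beta>+\<gamma>+2))
        = fact \<alpha> * fact \<beta> * fact \<gamma> / fact (\<alpha>+\<beta>+\<gamma>+2)"
      unfolding one D_def by (rule g) simp
    then show ?thesis unfolding i using D0 by (simp add: ennreal_mult[symmetric])
  qed
  finally show ?thesis .
qed


lemma mm_fact:
  "\<alpha> + \<beta> \<le> n \<Longrightarrow> mm n \<alpha> \<beta> * (fact \<alpha> * fact \<beta> * fact (n - \<alpha> - \<beta>)) = (fact n :: nat)"
proof (induction n arbitrary: \<alpha> \<beta>)
  case 0 then show ?case by simp
next
  case (Suc n)
  have h1: "(case \<alpha> of 0 \<Rightarrow> 0 | Suc a \<Rightarrow> mm n a \<beta>) * (fact \<alpha> * fact \<beta> * fact (Suc n - \<alpha> - \<beta>)) = \<alpha> * fact n"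
  proof (cases \<alpha>)
    case 0 then show ?thesis by simp
  next
    case (Suc a)
    then have "a + \<beta> \<le> n" using Suc.prems by simp
    then have "mm n a \<beta> * (fact a * fact \<beta> * fact (n - a - \<beta>)) = fact n" by (rule Suc.IH)
    then show ?thesis using Suc by (simp add: algebra_simps)
  qed
  have h2: "(case \<beta> of 0 \<Rightarrow> 0 | Suc b \<Rightarrow> mm n \<alpha> b) * (fact \<alpha> * fact \<beta> * fact (Suc n - \<alpha> - \<beta>)) = \<beta> * fact n"
  proof (cases \<beta>)
    case 0 then show ?thesis by simp
  next
    case (Suc b)
    then have "\<alpha> + b \<le> n" using Suc.prems by simp
    then have "mm n \<alpha> b * (fact \<alpha> * fact b * fact (n - \<alpha> - b)) = fact n" by (rule Suc.IH)
    moreover have "Suc n - \<alpha> - \<beta> = n - \<alpha> - b" using Suc by simp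
    ultimately show ?thesis using Suc by (simp add: algebra_simps)
  qed
  have h3: "mm n \<alpha> \<beta> * (fact \<alpha> * fact \<beta> * fact (Suc n - \<alpha> - \<beta>)) = (Suc n - \<alpha> - \<beta>) * fact n"
  proof (cases "\<alpha> + \<beta> \<le> n")
    case True
    then have e: "mm n \<alpha> \<beta> * (fact \<alpha> * fact \<beta> * fact (n - \<alpha> - \<beta>)) = fact n" by (rule Suc.IH)
    have "Suc n - \<alpha> - \<beta> = Suc (n - \<alpha> - \<beta>)" using True by simp
    then show ?thesis using e by (simp add: algebra_simps)
  next
    case False
    then show ?thesis using Suc.prems by (simp add: mm_zero)
  qed
  have "mm (Suc n) \<alpha> \<beta> * (fact \<alpha> * fact \<beta> * fact (Suc n - \<alpha> - \<beta>))
      = \<alpha> * fact n + \<beta> * fact n + (Suc n - \<alpha> - \<beta>) * fact n"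
    unfolding mm.simps using h1 h2 h3 by (simp add: algebra_simps)
  also have "\<dots> = (\<alpha> + \<beta> + (Suc n - \<alpha> - \<beta>)) * fact n" by (simp only: add_mult_distrib)
  also have "\<alpha> + \<beta> + (Suc n - \<alpha> - \<beta>) = Suc n" using Suc.prems by simp
  finally show ?case by simp
qed

definition DD :: "nat \<Rightarrow> int" where "DD m = (\<Sum>\<alpha>\<le>m. \<bar>2 * int \<alpha> - int m\<bar>)"

lemma DD_step: "DD (Suc (Suc m)) = DD m + 2 * int m + 4"
proof -
  have "DD (Suc (Suc m)) = int m + 2 + (\<Sum>\<alpha><Suc (Suc m). \<bar>2 * int (Suc \<alpha>) - int (Suc (Suc m))\<bar>)"
    unfolding DD_def by (subst sum.atMost_shift) simp
  also have "(\<Sum>\<alpha><Suc (Suc m). \<bar>2 * int (Suc \<alpha>) - int (Suc (Suc m))\<bar>) = (\<Sum>\<alpha>\<le>Suc m. \<bar>2 * int \<alpha> - int m\<bar>)"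
    by (simp add: lessThan_Suc_atMost algebra_simps)
  also have "\<dots> = DD m + (int m + 2)" unfolding DD_def by simp
  finally show ?thesis by simp
qed

lemma DD_closed: "2 * DD m + (if even m then 1 else 0) = (int m + 1)^2"
proof (induction m rule: nat_less_induct)
  case (1 m)
  show ?case
  proof (cases m)
    case 0 then show ?thesis by (simp add: DD_def)
  next
    case (Suc k)
    show ?thesis
    proof (cases k)
      case 0 then show ?thesis using Suc by (simp add: DD_def)
    next
      case (Suc j)
      have "2 * DD j + (if even j then 1 else 0) = (int j + 1)^2" using 1 \<open>m = Suc k\<close> Suc by simp
      then show ?thesis using \<open>m = Suc k\<close> Suc by (simp add: DD_step power2_eq_square algebra_simps)
    qed
  qed
qed

definition FF :: "nat \<Rightarrow> nat \<Rightarrow> nat \<Rightarrow> int" where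
  "FF n \<alpha> \<beta> = (if \<alpha> + \<beta> \<le> n then \<bar>2 * int \<alpha> + int \<beta> - int n\<bar> - int \<beta> else 0)"

definition PP :: "nat \<Rightarrow> nat \<Rightarrow> nat \<Rightarrow> int" where
  "PP n \<alpha> \<beta> = (if \<alpha> + \<beta> \<le> n then 1 else 0)"

lemma PB_closed: "n \<le> N \<Longrightarrow> 2 * (\<Sum>\<alpha>\<le>N. \<Sum>\<beta>\<le>N. PP n \<alpha> \<beta>) = (int n + 1) * (int n + 2)"
proof (induction n)
  case 0
  have "(\<Sum>\<alpha>\<le>N. \<Sum>\<beta>\<le>N. PP 0 \<alpha> \<beta>) = (\<Sum>\<alpha>\<le>N. if \<alpha> = 0 then (\<Sum>\<beta>\<le>N. if \<beta> = 0 then 1 else 0) else 0)"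
    unfolding PP_def by (intro sum.cong refl) auto
  also have "\<dots> = 1" by (simp add: sum.delta)
  finally show ?case by simp
next
  case (Suc n)
  have "(\<Sum>\<alpha>\<le>N. \<Sum>\<beta>\<le>N. PP (Suc n) \<alpha> \<beta>) = (\<Sum>\<alpha>\<le>N. PP (Suc n) \<alpha> 0 + (\<Sum>\<beta><N. PP (Suc n) \<alpha> (Suc \<beta>)))"
    by (intro sum.cong refl) (subst sum.atMost_shift, simp)
  also have "\<dots> = (\<Sum>\<alpha>\<le>N. PP (Suc n) \<alpha> 0 + (\<Sum>\<beta>\<le>N. PP n \<alpha> \<beta>))"
  proof (rule sum.cong[OF refl])
    fix \<alpha>
    have "(\<Sum>\<beta><N. PP (Suc n) \<alpha> (Suc \<beta>)) = (\<Sum>\<beta><N. PP n \<alpha> \<beta>)"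
      unfolding PP_def by (intro sum.cong refl) auto
    also have "\<dots> = (\<Sum>\<beta>\<le>N. PP n \<alpha> \<beta>)"
      using Suc.prems by (simp add: lessThan_Suc_atMost[symmetric] PP_def)
    finally show "PP (Suc n) \<alpha> 0 + (\<Sum>\<beta><N. PP (Suc n) \<alpha> (Suc \<beta>)) = PP (Suc n) \<alpha> 0 + (\<Sum>\<beta>\<le>N. PP n \<alpha> \<beta>)" by simp
  qed
  also have "\<dots> = (\<Sum>\<alpha>\<le>N. PP (Suc n) \<alpha> 0) + (\<Sum>\<alpha>\<le>N. \<Sum>\<beta>\<le>N. PP n \<alpha> \<beta>)"
    by (simp add: sum.distrib)
  also have "(\<Sum>\<alpha>\<le>N. PP (Suc n) \<alpha> 0) = int (n + 2)"
  proof -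
    have "(\<Sum>\<alpha>\<le>N. PP (Suc n) \<alpha> 0) = (\<Sum>\<alpha>\<in>{..Suc n}. 1)"
      using Suc.prems unfolding PP_def by (intro sum.mono_neutral_cong_right) auto
    then show ?thesis by simp
  qed
  finally show ?case using Suc by (simp add: algebra_simps)
qed

lemma TB_closed: "n \<le> N \<Longrightarrow> 4 * (\<Sum>\<alpha>\<le>N. \<Sum>\<beta>\<le>N. FF n \<alpha> \<beta>) + (if even n then 1 else 0) = (int n + 1)^2"
proof (induction n)
  case 0
  have "(\<Sum>\<alpha>\<le>N. \<Sum>\<beta>\<le>N. FF 0 \<alpha> \<beta>) = 0"
    unfolding FF_def by (intro sum.neutral ballI) auto
  then show ?case by simp
next
  case (Suc n)
  have "(\<Sum>\<alpha>\<le>N. \<Sum>\<beta>\<le>N. FF (Suc n) \<alpha> \<beta>) = (\<Sum>\<alpha>\<le>N. FF (Suc n) \<alpha> 0 + (\<Sum>\<beta><N. FF (Suc n) \<alpha> (Suc \<beta>)))"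
    by (intro sum.cong refl) (subst sum.atMost_shift, simp)
  also have "\<dots> = (\<Sum>\<alpha>\<le>N. FF (Suc n) \<alpha> 0 + ((\<Sum>\<beta>\<le>N. FF n \<alpha> \<beta>) - (\<Sum>\<beta>\<le>N. PP n \<alpha> \<beta>)))"
  proof (rule sum.cong[OF refl])
    fix \<alpha>
    have "(\<Sum>\<beta><N. FF (Suc n) \<alpha> (Suc \<beta>)) = (\<Sum>\<beta><N. FF n \<alpha> \<beta> - PP n \<alpha> \<beta>)"
      unfolding FF_def PP_def by (intro sum.cong refl) auto
    also have "\<dots> = (\<Sum>\<beta>\<le>N. FF n \<alpha> \<beta> - PP n \<alpha> \<beta>)"
      using Suc.prems by (simp add: lessThan_Suc_atMost[symmetric] PP_def FF_def)
    also have "\<dots> = (\<Sum>\<beta>\<le>N. FF n \<alpha> \<beta>) - (\<Sum>\<beta>\<le>N. PP n \<alpha> \<beta>)"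
      by (simp add: sum_subtractf)
    finally show "FF (Suc n) \<alpha> 0 + (\<Sum>\<beta><N. FF (Suc n) \<alpha> (Suc \<beta>)) = FF (Suc n) \<alpha> 0 + ((\<Sum>\<beta>\<le>N. FF n \<alpha> \<beta>) - (\<Sum>\<beta>\<le>N. PP n \<alpha> \<beta>))" by simp
  qed
  also have "\<dots> = (\<Sum>\<alpha>\<le>N. FF (Suc n) \<alpha> 0) + (\<Sum>\<alpha>\<le>N. \<Sum>\<beta>\<le>N. FF n \<alpha> \<beta>) - (\<Sum>\<alpha>\<le>N. \<Sum>\<beta>\<le>N. PP n \<alpha> \<beta>)"
    by (simp add: sum.distrib sum_subtractf)
  also have "(\<Sum>\<alpha>\<le>N. FF (Suc n) \<alpha> 0) = DD (Suc n)"
  proof -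
    have "(\<Sum>\<alpha>\<le>N. FF (Suc n) \<alpha> 0) = (\<Sum>\<alpha>\<le>Suc n. FF (Suc n) \<alpha> 0)"
      using Suc.prems unfolding FF_def by (intro sum.mono_neutral_cong_right) auto
    also have "\<dots> = DD (Suc n)" unfolding FF_def DD_def by (intro sum.cong refl) auto
    finally show ?thesis .
  qed
  finally have e: "(\<Sum>\<alpha>\<le>N. \<Sum>\<beta>\<le>N. FF (Suc n) \<alpha> \<beta>) = DD (Suc n) + (\<Sum>\<alpha>\<le>N. \<Sum>\<beta>\<le>N. FF n \<alpha> \<beta>) - (\<Sum>\<alpha>\<le>N. \<Sum>\<beta>\<le>N. PP n \<alpha> \<beta>)" .
  have i1: "4 * (\<Sum>\<alpha>\<le>N. \<Sum>\<beta>\<le>N. FF n \<alpha> \<beta>) + (if even n then 1 else 0) = (int n + 1)^2" using Suc by simp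
  have i2: "2 * (\<Sum>\<alpha>\<le>N. \<Sum>\<beta>\<le>N. PP n \<alpha> \<beta>) = (int n + 1) * (int n + 2)" using Suc.prems by (intro PB_closed) simp
  have i3: "2 * DD (Suc n) + (if even (Suc n) then 1 else 0) = (int (Suc n) + 1)^2" by (rule DD_closed)
  show ?case unfolding e using i1 i2 i3 by (cases "even n") (simp_all add: power2_eq_square algebra_simps)
qed


definition Hg :: "real \<Rightarrow> real \<Rightarrow> nat \<Rightarrow> nat \<Rightarrow> real" where
  "Hg c d k l = \<bar>real k + c * real l - d\<bar>"

definition YY :: "nat \<Rightarrow> (nat \<Rightarrow> nat \<Rightarrow> real) \<Rightarrow> (nat \<Rightarrow> real) \<Rightarrow> ennreal" where
  "YY n H u = (\<integral>\<^sup>+s. indicator II s * (\<integral>\<^sup>+t. indicator II t * ennreal (H (cnt n s u) (cnt n t u)) \<partial>lborel) \<partial>lborel)"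

lemma YY_sum:
  assumes cube: "\<And>j. j < n \<Longrightarrow> u j \<in> II" and H: "\<And>k l. 0 \<le> H k l"
  shows "YY n H u = ennreal (\<Sum>k\<le>n. \<Sum>l\<le>n. len n u k * len n u l * H k l)"
proof -
  have ln: "\<And>k. 0 \<le> len n u k" using len_nonneg[of n u] cube by blast
  have "YY n H u = (\<Sum>k\<le>n. \<Sum>l\<le>n. ennreal (len n u k) * ennreal (len n u l) * ennreal (H k l))"
    unfolding YY_def by (rule integral2_cnt) (rule cube)
  also have "\<dots> = (\<Sum>k\<le>n. \<Sum>l\<le>n. ennreal (len n u k * len n u l * H k l))"
    using ln H by (simp add: ennreal_mult)
  also have "\<dots> = (\<Sum>k\<le>n. ennreal (\<Sum>l\<le>n. len n u k * len n u l * H k l))"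
    using ln H by (intro sum.cong refl sum_ennreal) auto
  also have "\<dots> = ennreal (\<Sum>k\<le>n. \<Sum>l\<le>n. len n u k * len n u l * H k l)"
    using ln H by (intro sum_ennreal sum_nonneg) auto
  finally show ?thesis .
qed

lemma pointwise:
  assumes cube: "\<And>j. j < n \<Longrightarrow> u j \<in> II"
  shows "ennreal (\<Sum>i<n. (order_stat n u i + order_stat n u (n - 1 - i))^2) + YY n (Hg (-1) 0) u = YY n (Hg 1 (real n)) u"
proof -
  have ln: "\<And>k. 0 \<le> len n u k" using len_nonneg[of n u] cube by blast
  let ?S = "(\<Sum>i<n. (order_stat n u i + order_stat n u (n - 1 - i))^2)"
  have S0: "0 \<le> ?S" by (intro sum_nonneg) auto
  have e: "?S + (\<Sum>k\<le>n. \<Sum>l\<le>n. len n u k * len n u l * Hg (-1) 0 k l)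
      = (\<Sum>k\<le>n. \<Sum>l\<le>n. len n u k * len n u l * Hg 1 (real n) k l)"
    unfolding S_repr Hg_def by (simp add: sum.distrib[symmetric] algebra_simps)
  have p2: "0 \<le> (\<Sum>k\<le>n. \<Sum>l\<le>n. len n u k * len n u l * Hg (-1) 0 k l)"
    using ln by (intro sum_nonneg) (auto simp: Hg_def)
  show ?thesis
    using YY_sum[OF cube, where H="Hg (-1) 0"] YY_sum[OF cube, where H="Hg 1 (real n)"] e S0 p2
    by (simp add: Hg_def ennreal_plus[symmetric])
qed

lemma AE_cube: "AE u in unif_sample n. \<forall>j\<in>{..<n}. u j \<in> II"
proof (rule AE_finite_allI)
  fix j assume j: "j \<in> {..<n}"
  have a: "AE x in UU. x \<in> II" by (rule AE_uniform_measureI) auto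
  have d: "distr (unif_sample n) UU (\<lambda>u. u j) = UU"
    unfolding unif_sample_def by (rule distr_PiM_component) (use j prob_UU in auto)
  have "AE x in distr (unif_sample n) UU (\<lambda>u. u j). x \<in> II" by (subst d) (rule a)
  then show "AE u in unif_sample n. u j \<in> II"
    by (rule AE_distrD[rotated]) (use j in \<open>simp add: unif_sample_def\<close>)
qed simp

lemma rcnt: "real (cnt n s u) = (\<Sum>j<n. if u j \<le> s then 1 else 0)"
  unfolding cnt_sum of_nat_sum by (intro sum.cong refl) simp

lemma meas_YY: "(\<lambda>u. YY n (Hg c d) u) \<in> borel_measurable (unif_sample n)"
  unfolding YY_def Hg_def rcnt unif_sample_def by measurable


lemma prob_P: "prob_space (unif_sample n)"
  unfolding unif_sample_def by (rule prob_space_PiM) (rule prob_UU)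

lemma E_YY:
  "(\<integral>\<^sup>+u. YY n (Hg c d) u \<partial>unif_sample n)
   = (\<integral>\<^sup>+s. indicator II s * (\<integral>\<^sup>+t. indicator II t * (\<integral>\<^sup>+u. ennreal (Hg c d (cnt n s u) (cnt n t u)) \<partial>unif_sample n) \<partial>lborel) \<partial>lborel)"
proof -
  let ?P = "unif_sample n"
  interpret Pl: pair_sigma_finite ?P lborel
    by (rule pair_sigma_finite.intro[OF prob_space_imp_sigma_finite[OF prob_P] lborel.sigma_finite_measure_axioms])
  let ?f = "\<lambda>u s t. ennreal (Hg c d (cnt n s u) (cnt n t u))"
  have m1: "(\<lambda>(u, s). indicator II s * (\<integral>\<^sup>+t. indicator II t * ?f u s t \<partial>lborel)) \<in> borel_measurable (?P \<Otimes>\<^sub>M lborel)"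
    unfolding Hg_def rcnt unif_sample_def by measurable
  have m2: "(\<lambda>(u, t). indicator II t * ?f u s t) \<in> borel_measurable (?P \<Otimes>\<^sub>M lborel)" for s
    unfolding Hg_def rcnt unif_sample_def by measurable
  have m3: "(\<lambda>u. \<integral>\<^sup>+t. indicator II t * ?f u s t \<partial>lborel) \<in> borel_measurable ?P" for s
    unfolding Hg_def rcnt unif_sample_def by measurable
  have m4: "(\<lambda>u. ?f u s t) \<in> borel_measurable ?P" for s t
    unfolding Hg_def rcnt unif_sample_def by measurable
  have "(\<integral>\<^sup>+u. YY n (Hg c d) u \<partial>?P) = (\<integral>\<^sup>+u. (\<integral>\<^sup>+s. indicator II s * (\<integral>\<^sup>+t. indicator II t * ?f u s t \<partial>lborel) \<partial>lborel) \<partial>?P)"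
    unfolding YY_def ..
  also have "\<dots> = (\<integral>\<^sup>+s. (\<integral>\<^sup>+u. indicator II s * (\<integral>\<^sup>+t. indicator II t * ?f u s t \<partial>lborel) \<partial>?P) \<partial>lborel)"
    using Pl.Fubini'[OF m1] by simp
  also have "\<dots> = (\<integral>\<^sup>+s. indicator II s * (\<integral>\<^sup>+u. (\<integral>\<^sup>+t. indicator II t * ?f u s t \<partial>lborel) \<partial>?P) \<partial>lborel)"
    by (intro nn_integral_cong nn_integral_cmult m3)
  also have "\<dots> = (\<integral>\<^sup>+s. indicator II s * (\<integral>\<^sup>+t. (\<integral>\<^sup>+u. indicator II t * ?f u s t \<partial>?P) \<partial>lborel) \<partial>lborel)"
    using Pl.Fubini'[OF m2] by simp
  also have "\<dots> = (\<integral>\<^sup>+s. indicator II s * (\<integral>\<^sup>+t. indicator II t * (\<integral>\<^sup>+u. ?f u s t \<partial>?P) \<partial>lborel) \<partial>lborel)"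
    by (intro nn_integral_cong arg_cong2[where f="(*)"] refl nn_integral_cmult m4)
  finally show ?thesis .
qed

definition Phi :: "nat \<Rightarrow> (nat \<Rightarrow> nat \<Rightarrow> real) \<Rightarrow> real \<Rightarrow> real \<Rightarrow> real" where
  "Phi n H lo hi = (\<Sum>\<alpha>\<le>n. \<Sum>\<beta>\<le>n. real (mm n \<alpha> \<beta>) * ((lo+1/2)^\<alpha> * (hi-lo)^\<beta> * (1/2-hi)^(n-\<alpha>-\<beta>)) * H \<alpha> (\<alpha>+\<beta>))"

lemma E_cnt_sym:
  assumes st: "s \<in> II" "t \<in> II" and H: "\<And>k l. 0 \<le> H k l" and sym: "\<And>k l. H k l = H l k"
  shows "(\<integral>\<^sup>+u. ennreal (H (cnt n s u) (cnt n t u)) \<partial>unif_sample n) = ennreal (Phi n H (min s t) (max s t))"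
proof (cases "s \<le> t")
  case True
  then show ?thesis unfolding Phi_def using En[of s t n n H] st H by simp
next
  case False
  have "(\<integral>\<^sup>+u. ennreal (H (cnt n s u) (cnt n t u)) \<partial>unif_sample n) = (\<integral>\<^sup>+u. ennreal (H (cnt n t u) (cnt n s u)) \<partial>unif_sample n)"
    by (simp add: sym)
  then show ?thesis unfolding Phi_def using En[of t s n n H] st H False by simp
qed


lemma ind_Icc: "(indicator {s..b} t :: ennreal) = (if s \<le> t \<and> t \<le> b then 1 else 0)"
  by (simp add: indicator_def)
lemma ind_Ico: "(indicator {a..<s} t :: ennreal) = (if a \<le> t \<and> t < s then 1 else 0)"
  by (simp add: indicator_def)

lemma sq_int:
  assumes H: "\<And>k l. 0 \<le> H k l"
  shows "(\<integral>\<^sup>+s. indicator II s * (\<integral>\<^sup>+t. indicator II t * ennreal (Phi n H (min s t) (max s t)) \<partial>lborel) \<partial>lborel)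
    = ennreal (\<Sum>\<alpha>\<le>n. \<Sum>\<beta>\<le>n. real (mm n \<alpha> \<beta>) * H \<alpha> (\<alpha>+\<beta>) * (2 * (fact \<alpha> * fact \<beta> * fact (n-\<alpha>-\<beta>) / fact (\<alpha>+\<beta>+(n-\<alpha>-\<beta>)+2))))"
proof -
  define c where "c \<alpha> \<beta> = real (mm n \<alpha> \<beta>) * H \<alpha> (\<alpha>+\<beta>)" for \<alpha> \<beta>
  have c0: "0 \<le> c \<alpha> \<beta>" for \<alpha> \<beta> unfolding c_def using H by simp
  define W where "W lo hi \<alpha> \<beta> = (lo+1/2)^\<alpha> * (hi-lo)^\<beta> * (1/2-hi)^(n-\<alpha>-\<beta>)" for lo hi :: real and \<alpha> \<beta> :: nat
  define dv :: "nat \<Rightarrow> nat \<Rightarrow> real" where "dv \<alpha> \<beta> = fact \<alpha> * fact \<beta> * fact (n-\<alpha>-\<beta>) / fact (\<alpha>+\<beta>+(n-\<alpha>-\<beta>)+2)" for \<alpha> \<beta> :: nat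
  have dv0: "0 \<le> dv \<alpha> \<beta>" for \<alpha> \<beta> unfolding dv_def by simp
  have Phi_eq: "Phi n H lo hi = (\<Sum>\<alpha>\<le>n. \<Sum>\<beta>\<le>n. c \<alpha> \<beta> * W lo hi \<alpha> \<beta>)" for lo hi
    unfolding Phi_def c_def W_def by (intro sum.cong refl) (simp add: mult_ac)
  have Wnn: "0 \<le> W lo hi \<alpha> \<beta>" if "lo \<in> II" "hi \<in> II" "lo \<le> hi" for lo hi \<alpha> \<beta>
    unfolding W_def using that by simp
  have enn: "ennreal (Phi n H lo hi) = (\<Sum>\<alpha>\<le>n. \<Sum>\<beta>\<le>n. ennreal (c \<alpha> \<beta>) * ennreal (W lo hi \<alpha> \<beta>))"
    if "lo \<in> II" "hi \<in> II" "lo \<le> hi" for lo hi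
  proof -
    have nn: "\<And>\<alpha> \<beta>. 0 \<le> c \<alpha> \<beta> * W lo hi \<alpha> \<beta>" using c0 Wnn[OF that] by simp
    have "ennreal (Phi n H lo hi) = (\<Sum>\<alpha>\<le>n. ennreal (\<Sum>\<beta>\<le>n. c \<alpha> \<beta> * W lo hi \<alpha> \<beta>))"
      unfolding Phi_eq using nn by (intro sum_ennreal[symmetric] sum_nonneg) auto
    also have "\<dots> = (\<Sum>\<alpha>\<le>n. \<Sum>\<beta>\<le>n. ennreal (c \<alpha> \<beta> * W lo hi \<alpha> \<beta>))"
      using nn by (intro sum.cong refl sum_ennreal[symmetric]) auto
    also have "\<dots> = (\<Sum>\<alpha>\<le>n. \<Sum>\<beta>\<le>n. ennreal (c \<alpha> \<beta>) * ennreal (W lo hi \<alpha> \<beta>))"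
      using c0 Wnn[OF that] by (intro sum.cong refl) (simp add: ennreal_mult)
    finally show ?thesis .
  qed
  define K1 where "K1 \<alpha> \<beta> s = (\<integral>\<^sup>+t. indicator {s..1/2} t * ennreal (W s t \<alpha> \<beta>) \<partial>lborel)" for \<alpha> \<beta> s
  define K2 where "K2 \<alpha> \<beta> s = (\<integral>\<^sup>+t. indicator {-1/2..<s} t * ennreal (W t s \<alpha> \<beta>) \<partial>lborel)" for \<alpha> \<beta> s
  have inner: "(\<integral>\<^sup>+t. indicator II t * ennreal (Phi n H (min s t) (max s t)) \<partial>lborel)
      = (\<Sum>\<alpha>\<le>n. \<Sum>\<beta>\<le>n. ennreal (c \<alpha> \<beta>) * (K1 \<alpha> \<beta> s + K2 \<alpha> \<beta> s))" if s: "s \<in> II" for s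
  proof -
    have pw: "indicator II t * ennreal (Phi n H (min s t) (max s t))
        = (\<Sum>\<alpha>\<le>n. \<Sum>\<beta>\<le>n. ennreal (c \<alpha> \<beta>) * (indicator {s..1/2} t * ennreal (W s t \<alpha> \<beta>)
             + indicator {-1/2..<s} t * ennreal (W t s \<alpha> \<beta>)))" for t
    proof -
      consider "t \<in> {s..1/2}" | "t \<in> {-1/2..<s}" | "t \<notin> II" using s by force
      then show ?thesis
      proof cases
        case 1
        then have "t \<in> II" "s \<le> t" "t \<notin> {-1/2..<s}" using s by auto
        then show ?thesis using 1 enn[of s t] s by (simp add: min_def max_def)
      next
        case 2
        then have "t \<in> II" "t \<le> s" "t \<notin> {s..1/2}" using s by auto
        then show ?thesis using 2 enn[of t s] s by (simp add: min_def max_def)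
      next
        case 3
        then have "t \<notin> {s..1/2}" "t \<notin> {-1/2..<s}" using s by auto
        then show ?thesis using 3 by simp
      qed
    qed
    have "(\<integral>\<^sup>+t. indicator II t * ennreal (Phi n H (min s t) (max s t)) \<partial>lborel)
        = (\<integral>\<^sup>+t. (\<Sum>\<alpha>\<le>n. \<Sum>\<beta>\<le>n. ennreal (c \<alpha> \<beta>) * (indicator {s..1/2} t * ennreal (W s t \<alpha> \<beta>)
             + indicator {-1/2..<s} t * ennreal (W t s \<alpha> \<beta>))) \<partial>lborel)"
      by (intro nn_integral_cong) (rule pw)
    also have "\<dots> = (\<Sum>\<alpha>\<le>n. \<integral>\<^sup>+t. (\<Sum>\<beta>\<le>n. ennreal (c \<alpha> \<beta>) * (indicator {s..1/2} t * ennreal (W s t \<alpha> \<beta>)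
             + indicator {-1/2..<s} t * ennreal (W t s \<alpha> \<beta>))) \<partial>lborel)"
      by (rule nn_integral_sum) (unfold W_def, measurable)
    also have "\<dots> = (\<Sum>\<alpha>\<le>n. \<Sum>\<beta>\<le>n. \<integral>\<^sup>+t. ennreal (c \<alpha> \<beta>) * (indicator {s..1/2} t * ennreal (W s t \<alpha> \<beta>)
             + indicator {-1/2..<s} t * ennreal (W t s \<alpha> \<beta>)) \<partial>lborel)"
      by (intro sum.cong refl nn_integral_sum) (unfold W_def, measurable)
    also have "\<dots> = (\<Sum>\<alpha>\<le>n. \<Sum>\<beta>\<le>n. ennreal (c \<alpha> \<beta>) * (K1 \<alpha> \<beta> s + K2 \<alpha> \<beta> s))"
      unfolding K1_def K2_def
      by (intro sum.cong refl, subst nn_integral_cmult, (unfold W_def, measurable)[1], subst nn_integral_add) (unfold W_def, measurable)+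
    finally show ?thesis .
  qed
  have mK1: "(\<lambda>s. indicator II s * K1 \<alpha> \<beta> s) \<in> borel_measurable lborel" for \<alpha> \<beta>
    unfolding K1_def W_def ind_Icc by measurable
  have mK2: "(\<lambda>s. indicator II s * K2 \<alpha> \<beta> s) \<in> borel_measurable lborel" for \<alpha> \<beta>
    unfolding K2_def W_def ind_Ico by measurable
  have "(\<integral>\<^sup>+s. indicator II s * (\<integral>\<^sup>+t. indicator II t * ennreal (Phi n H (min s t) (max s t)) \<partial>lborel) \<partial>lborel)
      = (\<integral>\<^sup>+s. (\<Sum>\<alpha>\<le>n. \<Sum>\<beta>\<le>n. ennreal (c \<alpha> \<beta>) * (indicator II s * K1 \<alpha> \<beta> s + indicator II s * K2 \<alpha> \<beta> s)) \<partial>lborel)"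
  proof (intro nn_integral_cong)
    fix s :: real
    show "indicator II s * (\<integral>\<^sup>+t. indicator II t * ennreal (Phi n H (min s t) (max s t)) \<partial>lborel)
      = (\<Sum>\<alpha>\<le>n. \<Sum>\<beta>\<le>n. ennreal (c \<alpha> \<beta>) * (indicator II s * K1 \<alpha> \<beta> s + indicator II s * K2 \<alpha> \<beta> s))"
    proof (cases "s \<in> II")
      case True
      have i1: "indicator II s = (1::ennreal)" using True by simp
      show ?thesis unfolding i1 mult_1 by (rule inner[OF True])
    next
      case False
      have i0: "indicator II s = (0::ennreal)" using False by simp
      show ?thesis unfolding i0 by simp
    qed
  qed
  also have "\<dots> = (\<Sum>\<alpha>\<le>n. \<Sum>\<beta>\<le>n. \<integral>\<^sup>+s. ennreal (c \<alpha> \<beta>) * (indicator II s * K1 \<alpha> \<beta> s + indicator II s * K2 \<alpha> \<beta> s) \<partial>lborel)"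
  proof -
    note mK1[measurable] mK2[measurable]
    show ?thesis
      by (subst nn_integral_sum, measurable, intro sum.cong refl, subst nn_integral_sum, measurable)
  qed
  also have "\<dots> = (\<Sum>\<alpha>\<le>n. \<Sum>\<beta>\<le>n. ennreal (c \<alpha> \<beta>) * ((\<integral>\<^sup>+s. indicator II s * K1 \<alpha> \<beta> s \<partial>lborel) + (\<integral>\<^sup>+s. indicator II s * K2 \<alpha> \<beta> s \<partial>lborel)))"
  proof (intro sum.cong refl)
    fix \<alpha> \<beta>
    note mK1[measurable] mK2[measurable]
    have "(\<integral>\<^sup>+s. ennreal (c \<alpha> \<beta>) * (indicator II s * K1 \<alpha> \<beta> s + indicator II s * K2 \<alpha> \<beta> s) \<partial>lborel)
       = ennreal (c \<alpha> \<beta>) * (\<integral>\<^sup>+s. (indicator II s * K1 \<alpha> \<beta> s + indicator II s * K2 \<alpha> \<beta> s) \<partial>lborel)"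
      by (rule nn_integral_cmult) measurable
    also have "(\<integral>\<^sup>+s. (indicator II s * K1 \<alpha> \<beta> s + indicator II s * K2 \<alpha> \<beta> s) \<partial>lborel)
       = (\<integral>\<^sup>+s. indicator II s * K1 \<alpha> \<beta> s \<partial>lborel) + (\<integral>\<^sup>+s. indicator II s * K2 \<alpha> \<beta> s \<partial>lborel)"
      by (rule nn_integral_add) measurable
    finally show "(\<integral>\<^sup>+s. ennreal (c \<alpha> \<beta>) * (indicator II s * K1 \<alpha> \<beta> s + indicator II s * K2 \<alpha> \<beta> s) \<partial>lborel)
       = ennreal (c \<alpha> \<beta>) * ((\<integral>\<^sup>+s. indicator II s * K1 \<alpha> \<beta> s \<partial>lborel) + (\<integral>\<^sup>+s. indicator II s * K2 \<alpha> \<beta> s \<partial>lborel))" .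
  qed
  also have "\<dots> = (\<Sum>\<alpha>\<le>n. \<Sum>\<beta>\<le>n. ennreal (c \<alpha> \<beta>) * (ennreal (dv \<alpha> \<beta>) + ennreal (dv \<alpha> \<beta>)))"
    unfolding K1_def K2_def W_def dv_def by (simp only: dir1 dir2)
  also have "\<dots> = (\<Sum>\<alpha>\<le>n. \<Sum>\<beta>\<le>n. ennreal (c \<alpha> \<beta> * (2 * dv \<alpha> \<beta>)))"
  proof (intro sum.cong refl)
    fix \<alpha> \<beta>
    have a: "ennreal (dv \<alpha> \<beta>) + ennreal (dv \<alpha> \<beta>) = ennreal (dv \<alpha> \<beta> + dv \<alpha> \<beta>)"
      by (rule ennreal_plus[symmetric]) (rule dv0)+
    have b: "ennreal (c \<alpha> \<beta>) * ennreal (dv \<alpha> \<beta> + dv \<alpha> \<beta>) = ennreal (c \<alpha> \<beta> * (dv \<alpha> \<beta> + dv \<alpha> \<beta>))"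
      by (rule ennreal_mult[symmetric]) (use c0 dv0 in \<open>auto intro: add_nonneg_nonneg\<close>)
    show "ennreal (c \<alpha> \<beta>) * (ennreal (dv \<alpha> \<beta>) + ennreal (dv \<alpha> \<beta>)) = ennreal (c \<alpha> \<beta> * (2 * dv \<alpha> \<beta>))"
      by (simp only: a b mult_2)
  qed
  also have "\<dots> = ennreal (\<Sum>\<alpha>\<le>n. \<Sum>\<beta>\<le>n. c \<alpha> \<beta> * (2 * dv \<alpha> \<beta>))"
  proof -
    have nn: "\<And>\<alpha> \<beta>. 0 \<le> c \<alpha> \<beta> * (2 * dv \<alpha> \<beta>)" using c0 dv0 by simp
    have "(\<Sum>\<alpha>\<le>n. \<Sum>\<beta>\<le>n. ennreal (c \<alpha> \<beta> * (2 * dv \<alpha> \<beta>))) = (\<Sum>\<alpha>\<le>n. ennreal (\<Sum>\<beta>\<le>n. c \<alpha> \<beta> * (2 * dv \<alpha> \<beta>)))"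
      using nn by (intro sum.cong refl sum_ennreal) auto
    also have "\<dots> = ennreal (\<Sum>\<alpha>\<le>n. \<Sum>\<beta>\<le>n. c \<alpha> \<beta> * (2 * dv \<alpha> \<beta>))"
      using nn by (intro sum_ennreal sum_nonneg) auto
    finally show ?thesis .
  qed
  finally show ?thesis unfolding c_def dv_def .
qed


lemma Hg_sym1: "Hg 1 (real n) k l = Hg 1 (real n) l k" unfolding Hg_def by (simp add: algebra_simps)
lemma Hg_sym2: "Hg (-1) 0 k l = Hg (-1) 0 l k" unfolding Hg_def by simp

lemma E_val:
  assumes sym: "\<And>k l. Hg c d k l = Hg c d l k"
  shows "(\<integral>\<^sup>+u. YY n (Hg c d) u \<partial>unif_sample n)
   = ennreal (\<Sum>\<alpha>\<le>n. \<Sum>\<beta>\<le>n. real (mm n \<alpha> \<beta>) * Hg c d \<alpha> (\<alpha>+\<beta>) * (2 * (fact \<alpha> * fact \<beta> * fact (n-\<alpha>-\<beta>) / fact (\<alpha>+\<beta>+(n-\<alpha>-\<beta>)+2))))"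
proof -
  have H0: "\<And>k l. 0 \<le> Hg c d k l" unfolding Hg_def by simp
  have "(\<integral>\<^sup>+u. YY n (Hg c d) u \<partial>unif_sample n)
   = (\<integral>\<^sup>+s. indicator II s * (\<integral>\<^sup>+t. indicator II t * (\<integral>\<^sup>+u. ennreal (Hg c d (cnt n s u) (cnt n t u)) \<partial>unif_sample n) \<partial>lborel) \<partial>lborel)"
    by (rule E_YY)
  also have "\<dots> = (\<integral>\<^sup>+s. indicator II s * (\<integral>\<^sup>+t. indicator II t * ennreal (Phi n (Hg c d) (min s t) (max s t)) \<partial>lborel) \<partial>lborel)"
  proof (intro nn_integral_cong)
    fix s :: real
    show "indicator II s * (\<integral>\<^sup>+t. indicator II t * (\<integral>\<^sup>+u. ennreal (Hg c d (cnt n s u) (cnt n t u)) \<partial>unif_sample n) \<partial>lborel)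
        = indicator II s * (\<integral>\<^sup>+t. indicator II t * ennreal (Phi n (Hg c d) (min s t) (max s t)) \<partial>lborel)"
    proof (cases "s \<in> II")
      case True
      have "(\<integral>\<^sup>+t. indicator II t * (\<integral>\<^sup>+u. ennreal (Hg c d (cnt n s u) (cnt n t u)) \<partial>unif_sample n) \<partial>lborel)
          = (\<integral>\<^sup>+t. indicator II t * ennreal (Phi n (Hg c d) (min s t) (max s t)) \<partial>lborel)"
      proof (intro nn_integral_cong)
        fix t :: real
        show "indicator II t * (\<integral>\<^sup>+u. ennreal (Hg c d (cnt n s u) (cnt n t u)) \<partial>unif_sample n)
          = indicator II t * ennreal (Phi n (Hg c d) (min s t) (max s t))"
        proof (cases "t \<in> II")
          case True2: True
          show ?thesis using E_cnt_sym[where H="Hg c d" and n=n, OF True True2 H0 sym] by (simp only:)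
        next
          case False
          have i0: "indicator II t = (0::ennreal)" using False by simp
          show ?thesis unfolding i0 by simp
        qed
      qed
      then show ?thesis by (simp only:)
    next
      case False
      have i0: "indicator II s = (0::ennreal)" using False by simp
      show ?thesis unfolding i0 by simp
    qed
  qed
  also have "\<dots> = ennreal (\<Sum>\<alpha>\<le>n. \<Sum>\<beta>\<le>n. real (mm n \<alpha> \<beta>) * Hg c d \<alpha> (\<alpha>+\<beta>) * (2 * (fact \<alpha> * fact \<beta> * fact (n-\<alpha>-\<beta>) / fact (\<alpha>+\<beta>+(n-\<alpha>-\<beta>)+2))))"
    by (rule sq_int[OF H0])
  finally show ?thesis .
qed

lemma V_simp:
  "(\<Sum>\<alpha>\<le>n. \<Sum>\<beta>\<le>n. real (mm n \<alpha> \<beta>) * H \<alpha> (\<alpha>+\<beta>) * (2 * (fact \<alpha> * fact \<beta> * fact (n-\<alpha>-\<beta>) / fact (\<alpha>+\<beta>+(n-\<alpha>-\<beta>)+2))))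
   = 2 / ((real n + 1) * (real n + 2)) * (\<Sum>\<alpha>\<le>n. \<Sum>\<beta>\<le>n. if \<alpha> + \<beta> \<le> n then H \<alpha> (\<alpha>+\<beta>) else 0)"
proof -
  have f2: "(fact (n + 2) :: real) = (real n + 1) * (real n + 2) * fact n"
  proof -
    have "(fact (Suc (Suc n)) :: real) = real (Suc (Suc n)) * (real (Suc n) * fact n)" by simp
    then show ?thesis by (simp add: numeral_2_eq_2 algebra_simps)
  qed
  have t: "real (mm n \<alpha> \<beta>) * H \<alpha> (\<alpha>+\<beta>) * (2 * (fact \<alpha> * fact \<beta> * fact (n-\<alpha>-\<beta>) / fact (\<alpha>+\<beta>+(n-\<alpha>-\<beta>)+2)))
      = 2 / ((real n + 1) * (real n + 2)) * (if \<alpha> + \<beta> \<le> n then H \<alpha> (\<alpha>+\<beta>) else 0)" for \<alpha> \<beta>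
  proof (cases "\<alpha> + \<beta> \<le> n")
    case True
    have i: "\<alpha>+\<beta>+(n-\<alpha>-\<beta>)+2 = n + 2" using True by simp
    have m: "real (mm n \<alpha> \<beta>) * (fact \<alpha> * fact \<beta> * fact (n-\<alpha>-\<beta>)) = fact n"
      using arg_cong[OF mm_fact[OF True], of real] by (simp only: of_nat_mult of_nat_fact)
    have fn: "(fact n :: real) > 0" by simp
    have "real (mm n \<alpha> \<beta>) * H \<alpha> (\<alpha>+\<beta>) * (2 * (fact \<alpha> * fact \<beta> * fact (n-\<alpha>-\<beta>) / fact (n + 2)))
        = 2 * H \<alpha> (\<alpha>+\<beta>) * (real (mm n \<alpha> \<beta>) * (fact \<alpha> * fact \<beta> * fact (n-\<alpha>-\<beta>))) / fact (n + 2)"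
      by (simp add: field_simps)
    also have "\<dots> = 2 * H \<alpha> (\<alpha>+\<beta>) * fact n / ((real n + 1) * (real n + 2) * fact n)"
      unfolding m f2 ..
    also have "\<dots> = (2 * H \<alpha> (\<alpha>+\<beta>)) / ((real n + 1) * (real n + 2))"
      using fn by (intro mult_divide_mult_cancel_right) simp
    also have "\<dots> = 2 / ((real n + 1) * (real n + 2)) * H \<alpha> (\<alpha>+\<beta>)" by simp
    finally show ?thesis unfolding i using True by simp
  next
    case False
    then show ?thesis by (simp add: mm_zero)
  qed
  show ?thesis unfolding t by (simp add: sum_distrib_left)
qed

theorem mainTheorem7:
  fixes n :: nat
  shows "measure (unif_sample n)
     {u \<in> space (unif_sample n).
        (\<Sum>i<n. (order_stat n u i + order_stat n u (n - 1 - i))^2) \<ge> 1} \<le> 1/2"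
proof -
  let ?P = "unif_sample n"
  define A where "A = {u \<in> space ?P. (\<Sum>i<n. (order_stat n u i + order_stat n u (n - 1 - i))^2) \<ge> 1}"
  show ?thesis
  proof (cases "A \<in> sets ?P")
    case False
    then show ?thesis unfolding A_def[symmetric] by (simp add: measure_notin_sets)
  next
    case Aset: True
    interpret P: prob_space ?P by (rule prob_P)
    define R where "R H = (\<Sum>\<alpha>\<le>n. \<Sum>\<beta>\<le>n. if \<alpha> + \<beta> \<le> n then H \<alpha> (\<alpha>+\<beta>) else (0::real))" for H
    define K where "K = 2 / ((real n + 1) * (real n + 2))"
    have K0: "0 \<le> K" unfolding K_def by simp
    have E1: "(\<integral>\<^sup>+u. YY n (Hg 1 (real n)) u \<partial>?P) = ennreal (K * R (Hg 1 (real n)))"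
      using E_val[OF Hg_sym1] unfolding V_simp K_def R_def .
    have E2: "(\<integral>\<^sup>+u. YY n (Hg (-1) 0) u \<partial>?P) = ennreal (K * R (Hg (-1) 0))"
      using E_val[OF Hg_sym2] unfolding V_simp K_def R_def .
    have R2: "0 \<le> R (Hg (-1) 0)" unfolding R_def Hg_def by (intro sum_nonneg) auto
    have R1: "0 \<le> R (Hg 1 (real n))" unfolding R_def Hg_def by (intro sum_nonneg) auto
    have RD: "R (Hg 1 (real n)) - R (Hg (-1) 0) = real_of_int (\<Sum>\<alpha>\<le>n. \<Sum>\<beta>\<le>n. FF n \<alpha> \<beta>)"
    proof -
      have "R (Hg 1 (real n)) - R (Hg (-1) 0)
          = (\<Sum>\<alpha>\<le>n. \<Sum>\<beta>\<le>n. (if \<alpha> + \<beta> \<le> n then Hg 1 (real n) \<alpha> (\<alpha>+\<beta>) else 0) - (if \<alpha> + \<beta> \<le> n then Hg (-1) 0 \<alpha> (\<alpha>+\<beta>) else 0))"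
        unfolding R_def by (simp add: sum_subtractf)
      also have "\<dots> = (\<Sum>\<alpha>\<le>n. \<Sum>\<beta>\<le>n. real_of_int (FF n \<alpha> \<beta>))"
        unfolding Hg_def FF_def by (intro sum.cong refl) (auto simp: algebra_simps)
      finally show ?thesis by simp
    qed
    have TB: "4 * (\<Sum>\<alpha>\<le>n. \<Sum>\<beta>\<le>n. FF n \<alpha> \<beta>) \<le> (int n + 1) * (int n + 2)"
    proof -
      have h: "4 * (\<Sum>\<alpha>\<le>n. \<Sum>\<beta>\<le>n. FF n \<alpha> \<beta>) + (if even n then 1 else 0) = (int n + 1)^2"
        using TB_closed[of n n] by simp
      have h2: "(int n + 1)^2 \<le> (int n + 1) * (int n + 2)" by (simp add: power2_eq_square algebra_simps)
      have h3: "0 \<le> (if even n then 1 else 0::int)" by simp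
      show ?thesis using h h2 h3 by linarith
    qed
    have bound: "K * (R (Hg 1 (real n)) - R (Hg (-1) 0)) \<le> 1/2"
    proof -
      have "4 * real_of_int (\<Sum>\<alpha>\<le>n. \<Sum>\<beta>\<le>n. FF n \<alpha> \<beta>) \<le> (real n + 1) * (real n + 2)"
      proof -
        have "real_of_int (4 * (\<Sum>\<alpha>\<le>n. \<Sum>\<beta>\<le>n. FF n \<alpha> \<beta>)) \<le> real_of_int ((int n + 1) * (int n + 2))"
          using TB of_int_le_iff by blast
        then show ?thesis by simp
      qed
      then have h4: "4 * real_of_int (\<Sum>\<alpha>\<le>n. \<Sum>\<beta>\<le>n. FF n \<alpha> \<beta>) \<le> (real n + 1) * (real n + 2)" .
      define X where "X = real_of_int (\<Sum>\<alpha>\<le>n. \<Sum>\<beta>\<le>n. FF n \<alpha> \<beta>)"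
      define D where "D = (real n + 1) * (real n + 2)"
      have D0: "0 < D" unfolding D_def by simp
      have "2 / D * X = (2 * X) / D" by simp
      also have "\<dots> \<le> 1/2" using h4 D0 unfolding X_def[symmetric] D_def[symmetric] by (simp add: pos_divide_le_eq)
      finally show ?thesis unfolding RD K_def X_def[symmetric] D_def[symmetric] .
    qed
    have pw: "AE u in ?P. indicator A u + YY n (Hg (-1) 0) u \<le> YY n (Hg 1 (real n)) u"
      using AE_cube
    proof (rule eventually_mono)
      fix u assume cube: "\<forall>j\<in>{..<n}. u j \<in> II"
      have eq: "ennreal (\<Sum>i<n. (order_stat n u i + order_stat n u (n - 1 - i))^2) + YY n (Hg (-1) 0) u = YY n (Hg 1 (real n)) u"
        by (rule pointwise) (use cube in auto)
      have "indicator A u \<le> ennreal (\<Sum>i<n. (order_stat n u i + order_stat n u (n - 1 - i))^2)"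
        unfolding A_def by (auto simp: indicator_def)
      then show "indicator A u + YY n (Hg (-1) 0) u \<le> YY n (Hg 1 (real n)) u"
        unfolding eq[symmetric] by (rule add_right_mono)
    qed
    have "emeasure ?P A + ennreal (K * R (Hg (-1) 0)) = (\<integral>\<^sup>+u. indicator A u + YY n (Hg (-1) 0) u \<partial>?P)"
      using Aset meas_YY[of n "-1" 0] by (simp add: nn_integral_add E2)
    also have "\<dots> \<le> (\<integral>\<^sup>+u. YY n (Hg 1 (real n)) u \<partial>?P)"
      by (rule nn_integral_mono_AE[OF pw])
    also have "\<dots> = ennreal (K * R (Hg 1 (real n)))" by (rule E1)
    finally have "ennreal (measure ?P A) + ennreal (K * R (Hg (-1) 0)) \<le> ennreal (K * R (Hg 1 (real n)))"
      by (simp add: P.emeasure_eq_measure)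
    moreover have "ennreal (measure ?P A + K * R (Hg (-1) 0)) = ennreal (measure ?P A) + ennreal (K * R (Hg (-1) 0))"
      by (rule ennreal_plus) (simp_all add: K0 R2)
    ultimately have "ennreal (measure ?P A + K * R (Hg (-1) 0)) \<le> ennreal (K * R (Hg 1 (real n)))"
      by (simp only:)
    moreover have "0 \<le> K * R (Hg 1 (real n))" using K0 R1 by simp
    ultimately have "measure ?P A + K * R (Hg (-1) 0) \<le> K * R (Hg 1 (real n))"
      using ennreal_le_iff by blast
    then have "measure ?P A \<le> K * (R (Hg 1 (real n)) - R (Hg (-1) 0))" by (simp add: algebra_simps)
    then show ?thesis unfolding A_def[symmetric] using bound by linarith
  qed
qed

end
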